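(* Let $E$ be a Banach space, $T\colon\ell^1\to E$ a continuous linear operator with $T(e_n)\neq0$ for all $n$, and $p>1$. (a) If $T$ is $p$-power dominated and admits a continuous linear extension to $\ell^p$, then $\ell^1\subset\ell^{1/p}(m_T)$, $T=I_{m_T}$ on $\ell^1$, and $I_{m_T}\colon\ell^{1/p}(m_T)\to E$ is $\frac1p$-th power factorable with a continuous extension; moreover this is optimal: whenever $\xi$ is a measure on $\mathcal P(\mathbb N)$, $Z(\xi)$ is a $\sigma$-order continuous quasi-Banach function space with $\ell^1\subset Z(\xi)$ (via $[i]$), and $S\colon Z(\xi)\to E$ is linear, equal to $T$ on $\ell^1$, and $\frac1p$-th power factorable with a continuous extension, then $Z(\xi)\subset\ell^{1/p}(m_T)$ (via $[i]$) and $S=I_{m_T}$ on $Z(\xi)$. (b) If $T$ is $\frac1p$-power dominated, then $\ell^1\subset\ell^1(m_T)$, $T=I_{m_T}$ on $\ell^1$, and $I_{m_T}\colon\ell^1(m_T)\to E$ is $\frac1p$-th power factorable with a continuous extension; moreover this is optimal: whenever $\xi$ is a measure on $\mathcal P(\mathbb N)$, $Z(\xi)$ is a $\sigma$-order continuous quasi-Banach function space with $\ell^1\subset Z(\xi)$ (via $[i]$), and $S\colon Z(\xi)\to E$ is linear, equal to $T$ on $\ell^1$, and $\frac1p$-th power factorable with a continuous extension, then $Z(\xi)\subset\ell^1(m_T)$ (via $[i]$) and $S=I_{m_T}$ on $Z(\xi)$.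
   Context: $e_n=\chi_{\{n\}}$; $\ell^0$ is the space of real sequences; $\mathcal P_F(\mathbb N)$ the $\delta$-ring of finite subsets of $\mathbb N$. $m_T\colon\mathcal P_F(\mathbb N)\to E$, $m_T(A)=T(\chi_A)$, is a vector measure whose only null set is $\emptyset$; $|x^*m_T|$ is the variation of $x^*\circ m_T$ on $\mathcal P(\mathbb N)$. $\ell^1(m_T)$ is the set of $x\in\ell^0$ with $x\in L^1(|x^*m_T|)$ for all $x^*\in E^*$ and such that for each $A\subset\mathbb N$ there is $\int_Ax\,dm_T\in E$ with $x^*(\int_Ax\,dm_T)=\int_Ax\,dx^*m_T$; norm $\sup_{x^*\in B_{E^*}}\int|x|d|x^*m_T|$; $I_{m_T}(x)=\int_{\mathbb N}x\,dm_T$. $\ell^r(m_T)=\{x:|x|^r\in\ell^1(m_T)\}$ with quasi-norm $\||x|^r\|_{\ell^1(m_T)}^{1/r}$. For $0<r<\infty$, $T$ is $r$-power dominated if there is $C>0$ with $\|\sum_{j\in F}x_j^rT(e_j)\|_E^{1/r}\le C\sup_{N\subset F}\|\sum_{j\in N}x_jT(e_j)\|_E$ for all finite $F\subset\mathbb N$, $(x_j)_{j\in F}\subset[0,\infty)$. Quasi-Banach function space $Z(\xi)$: a subspace of $\xi$-a.e. classes of sequences, solid ($|g|\le|f|$ a.e., $f\in Z\Rightarrow g\in Z$), complete under a quasi-norm ($\|x+y\|\le K(\|x\|+\|y\|)$) monotone for the a.e. order; $\sigma$-order continuous if $f_n\downarrow0$ a.e. $\Rightarrow\|f_n\|\to0$.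 For such $Z(\xi)$ and $q\in(0,\infty)$, $Z(\xi)^q=\{f:|f|^q\in Z(\xi)\}$; a linear $R\colon Z(\xi)\to E$ is $\frac1p$-th power factorable with a continuous extension if it has a continuous linear extension to $Z(\xi)^{p}+Z(\xi)$ (quasi-normed by $\inf(\||f_1|^p\|_{Z}^{1/p}+\|f_2\|_Z)$ over decompositions $f=f_1+f_2$). The inclusion "$\ell^1\subset Z(\xi)$ via $[i]$" means every sequence in $\ell^1$, viewed as a $\xi$-class, lies in $Z(\xi)$; "$Z(\xi)\subset\ell^{r}(m_T)$ via $[i]$" means $\xi$-null sets are empty (i.e. $\xi(\{n\})>0$ for all $n$) and every element of $Z(\xi)$ lies in $\ell^r(m_T)$. *)

theory Defs
  imports "HOL-Analysis.Analysis"
begin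

definition unitvec :: "nat \<Rightarrow> nat \<Rightarrow> real" where
  "unitvec n = (\<lambda>k. if k = n then 1 else 0)"

definition ell1 :: "(nat \<Rightarrow> real) set" where
  "ell1 = {x. summable (\<lambda>n. \<bar>x n\<bar>)}"

definition ellp :: "real \<Rightarrow> (nat \<Rightarrow> real) set" where
  "ellp p = {x. summable (\<lambda>n. \<bar>x n\<bar> powr p)}"

definition lin_on :: "(nat \<Rightarrow> real) set \<Rightarrow> ((nat \<Rightarrow> real) \<Rightarrow> 'e::real_vector) \<Rightarrow> bool" where
  "lin_on A R \<longleftrightarrow>
     (\<forall>x\<in>A. \<forall>y\<in>A. R (\<lambda>n. x n + y n) = R x + R y) \<and>
     (\<forall>c. \<forall>x\<in>A. R (\<lambda>n. c * x n) = c *\<^sub>R R x)"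

definition cont_lin_ell1 :: "((nat \<Rightarrow> real) \<Rightarrow> 'e::real_normed_vector) \<Rightarrow> bool" where
  "cont_lin_ell1 T \<longleftrightarrow> lin_on ell1 T \<and>
     (\<exists>C. \<forall>x\<in>ell1. norm (T x) \<le> C * (\<Sum>n. \<bar>x n\<bar>))"

definition has_ext_ellp :: "((nat \<Rightarrow> real) \<Rightarrow> 'e::real_normed_vector) \<Rightarrow> real \<Rightarrow> bool" where
  "has_ext_ellp T p \<longleftrightarrow> (\<exists>T'. (\<forall>x\<in>ell1. T' x = T x) \<and> lin_on (ellp p) T' \<and>
     (\<exists>C. \<forall>x\<in>ellp p. norm (T' x) \<le> C * (\<Sum>n. \<bar>x n\<bar> powr p) powr (1/p)))"

definition power_dominated :: "((nat \<Rightarrow> real) \<Rightarrow> 'e::real_normed_vector) \<Rightarrow> real \<Rightarrow> bool" where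
  "power_dominated T r \<longleftrightarrow> (\<exists>C>0. \<forall>F x. finite F \<longrightarrow> (\<forall>j\<in>F. 0 \<le> x j) \<longrightarrow>
     norm (\<Sum>j\<in>F. (x j powr r) *\<^sub>R T (unitvec j)) powr (1/r)
       \<le> C * Sup {norm (\<Sum>j\<in>N. x j *\<^sub>R T (unitvec j)) | N. N \<subseteq> F})"

definition dual :: "('e::real_normed_vector \<Rightarrow> real) set" where
  "dual = {f. bounded_linear f}"

text \<open>Variation |x* m_T| of the scalar measure x* o m_T, on P(N).\<close>
definition var_meas :: "((nat \<Rightarrow> real) \<Rightarrow> 'e::real_normed_vector) \<Rightarrow> ('e \<Rightarrow> real) \<Rightarrow> nat measure" where
  "var_meas T f = density (count_space UNIV) (\<lambda>n. ennreal \<bar>f (T (unitvec n))\<bar>)"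

text \<open>Scalar integral over A of x with respect to x* o m_T.\<close>
definition scal_int :: "((nat \<Rightarrow> real) \<Rightarrow> 'e::real_normed_vector) \<Rightarrow> ('e \<Rightarrow> real) \<Rightarrow> nat set \<Rightarrow> (nat \<Rightarrow> real) \<Rightarrow> real" where
  "scal_int T f A x = (\<integral>n. indicator A n * x n * f (T (unitvec n)) \<partial>count_space UNIV)"

definition l1m :: "((nat \<Rightarrow> real) \<Rightarrow> 'e::real_normed_vector) \<Rightarrow> (nat \<Rightarrow> real) set" where
  "l1m T = {x. (\<forall>f\<in>dual. integrable (var_meas T f) x) \<and>
                (\<forall>A. \<exists>v. \<forall>f\<in>dual. f v = scal_int T f A x)}"

definition vec_int :: "((nat \<Rightarrow> real) \<Rightarrow> 'e::real_normed_vector) \<Rightarrow> nat set \<Rightarrow> (nat \<Rightarrow> real) \<Rightarrow> 'e" where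
  "vec_int T A x = (SOME v. \<forall>f\<in>dual. f v = scal_int T f A x)"

definition I_m :: "((nat \<Rightarrow> real) \<Rightarrow> 'e::real_normed_vector) \<Rightarrow> (nat \<Rightarrow> real) \<Rightarrow> 'e" where
  "I_m T x = vec_int T UNIV x"

definition norm_l1m :: "((nat \<Rightarrow> real) \<Rightarrow> 'e::real_normed_vector) \<Rightarrow> (nat \<Rightarrow> real) \<Rightarrow> real" where
  "norm_l1m T x = (SUP f\<in>{f\<in>dual. onorm f \<le> 1}. integral\<^sup>L (var_meas T f) (\<lambda>n. \<bar>x n\<bar>))"

definition lrm :: "((nat \<Rightarrow> real) \<Rightarrow> 'e::real_normed_vector) \<Rightarrow> real \<Rightarrow> (nat \<Rightarrow> real) set" where
  "lrm T r = {x. (\<lambda>n. \<bar>x n\<bar> powr r) \<in> l1m T}"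

definition norm_lrm :: "((nat \<Rightarrow> real) \<Rightarrow> 'e::real_normed_vector) \<Rightarrow> real \<Rightarrow> (nat \<Rightarrow> real) \<Rightarrow> real" where
  "norm_lrm T r x = norm_l1m T (\<lambda>n. \<bar>x n\<bar> powr r) powr (1/r)"

text \<open>Z is a set of sequences (representatives, closed under xi-a.e. equality) with quasi-norm N.\<close>
definition qbfs :: "nat measure \<Rightarrow> (nat \<Rightarrow> real) set \<Rightarrow> ((nat \<Rightarrow> real) \<Rightarrow> real) \<Rightarrow> bool" where
  "qbfs \<xi> Z N \<longleftrightarrow>
     (\<lambda>n. 0) \<in> Z \<and>
     (\<forall>f\<in>Z. \<forall>g\<in>Z. (\<lambda>n. f n + g n) \<in> Z) \<and>
     (\<forall>c. \<forall>f\<in>Z. (\<lambda>n. c * f n) \<in> Z) \<and>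
     (\<forall>f\<in>Z. \<forall>g. (AE n in \<xi>. \<bar>g n\<bar> \<le> \<bar>f n\<bar>) \<longrightarrow> g \<in> Z \<and> N g \<le> N f) \<and>
     (\<forall>f\<in>Z. 0 \<le> N f \<and> (N f = 0 \<longleftrightarrow> (AE n in \<xi>. f n = 0))) \<and>
     (\<forall>c. \<forall>f\<in>Z. N (\<lambda>n. c * f n) = \<bar>c\<bar> * N f) \<and>
     (\<exists>K\<ge>1. \<forall>f\<in>Z. \<forall>g\<in>Z. N (\<lambda>n. f n + g n) \<le> K * (N f + N g)) \<and>
     (\<forall>F. (\<forall>k. F k \<in> Z) \<longrightarrow>
          (\<forall>\<epsilon>>0. \<exists>M. \<forall>m\<ge>M. \<forall>k\<ge>M. N (\<lambda>n. F m n - F k n) < \<epsilon>) \<longrightarrow>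
          (\<exists>f\<in>Z. (\<lambda>k. N (\<lambda>n. F k n - f n)) \<longlonglongrightarrow> 0))"

definition sigma_oc :: "nat measure \<Rightarrow> (nat \<Rightarrow> real) set \<Rightarrow> ((nat \<Rightarrow> real) \<Rightarrow> real) \<Rightarrow> bool" where
  "sigma_oc \<xi> Z N \<longleftrightarrow> (\<forall>F. (\<forall>k. F k \<in> Z) \<longrightarrow>
      (AE n in \<xi>. (\<forall>k. F (Suc k) n \<le> F k n) \<and> (\<lambda>k. F k n) \<longlonglongrightarrow> 0) \<longrightarrow>
      (\<lambda>k. N (F k)) \<longlonglongrightarrow> 0)"

definition decomp :: "(nat \<Rightarrow> real) set \<Rightarrow> real \<Rightarrow> (nat \<Rightarrow> real) \<Rightarrow> (nat \<Rightarrow> real) \<Rightarrow> (nat \<Rightarrow> real) \<Rightarrow> bool" where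
  "decomp Z p f f1 f2 \<longleftrightarrow> (\<forall>n. f n = f1 n + f2 n) \<and> (\<lambda>n. \<bar>f1 n\<bar> powr p) \<in> Z \<and> f2 \<in> Z"

definition powsum :: "(nat \<Rightarrow> real) set \<Rightarrow> real \<Rightarrow> (nat \<Rightarrow> real) set" where
  "powsum Z p = {f. \<exists>f1 f2. decomp Z p f f1 f2}"

definition powsum_norm :: "(nat \<Rightarrow> real) set \<Rightarrow> ((nat \<Rightarrow> real) \<Rightarrow> real) \<Rightarrow> real \<Rightarrow> (nat \<Rightarrow> real) \<Rightarrow> real" where
  "powsum_norm Z N p f = Inf {N (\<lambda>n. \<bar>f1 n\<bar> powr p) powr (1/p) + N f2 | f1 f2. decomp Z p f f1 f2}"

text \<open>R : Z \<rightarrow> E is 1/p-th power factorable with a continuous extension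
  (continuity of a linear map on a quasi-normed space = boundedness).\<close>
definition pfact :: "(nat \<Rightarrow> real) set \<Rightarrow> ((nat \<Rightarrow> real) \<Rightarrow> real) \<Rightarrow> real \<Rightarrow> ((nat \<Rightarrow> real) \<Rightarrow> 'e::real_normed_vector) \<Rightarrow> bool" where
  "pfact Z N p R \<longleftrightarrow> (\<exists>R'. (\<forall>f\<in>Z. R' f = R f) \<and> lin_on (powsum Z p) R' \<and>
      (\<exists>C. \<forall>f\<in>powsum Z p. norm (R' f) \<le> C * powsum_norm Z N p f))"

definition optimal :: "((nat \<Rightarrow> real) \<Rightarrow> 'e::real_normed_vector) \<Rightarrow> real \<Rightarrow> (nat \<Rightarrow> real) set \<Rightarrow> bool" where
  "optimal T p X \<longleftrightarrow> (\<forall>(\<xi>::nat measure) Z N (S::(nat \<Rightarrow> real) \<Rightarrow> 'e).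
     sets \<xi> = UNIV \<longrightarrow> qbfs \<xi> Z N \<longrightarrow> sigma_oc \<xi> Z N \<longrightarrow> ell1 \<subseteq> Z \<longrightarrow>
     (\<forall>f\<in>Z. \<forall>g\<in>Z. (AE n in \<xi>. f n = g n) \<longrightarrow> S f = S g) \<longrightarrow>
     lin_on Z S \<longrightarrow> (\<forall>x\<in>ell1. S x = T x) \<longrightarrow> pfact Z N p S \<longrightarrow>
     ((\<forall>n. emeasure \<xi> {n} > 0) \<and> Z \<subseteq> X \<and> (\<forall>f\<in>Z. S f = I_m T f)))"

end

theory Submission
  imports Defs "HOL-Library.Diagonal_Subsequence"
begin


definition goodG :: "('a::real_vector \<Rightarrow> real) \<Rightarrow> ('a \<times> real) set \<Rightarrow> ('a \<times> real) set \<Rightarrow> bool" where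
  "goodG p G0 G \<longleftrightarrow> G0 \<subseteq> G \<and>
     (\<forall>x a b. (x,a)\<in>G \<longrightarrow> (x,b)\<in>G \<longrightarrow> a = b) \<and>
     (\<forall>x a y b. (x,a)\<in>G \<longrightarrow> (y,b)\<in>G \<longrightarrow> (x+y, a+b)\<in>G) \<and>
     (\<forall>x a c. (x,a)\<in>G \<longrightarrow> (c *\<^sub>R x, c*a)\<in>G) \<and>
     (\<forall>x a. (x,a)\<in>G \<longrightarrow> a \<le> p x)"

lemma HB_extend_step:
  fixes p :: "'a::real_vector \<Rightarrow> real"
  assumes p_add: "\<And>x y. p (x + y) \<le> p x + p y"
    and p_scale: "\<And>c x. c > 0 \<Longrightarrow> p (c *\<^sub>R x) = c * p x"
    and g: "goodG p G0 G" and ne: "G \<noteq> {}"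
    and x0: "x0 \<notin> fst ` G"
  shows "\<exists>G'. goodG p G0 G' \<and> G \<subseteq> G' \<and> G' \<noteq> G"
proof -
  from g have Gfun: "\<And>x a b. (x,a)\<in>G \<Longrightarrow> (x,b)\<in>G \<Longrightarrow> a = b"
    and Gadd: "\<And>x a y b. (x,a)\<in>G \<Longrightarrow> (y,b)\<in>G \<Longrightarrow> (x+y, a+b)\<in>G"
    and Gsc: "\<And>x a c. (x,a)\<in>G \<Longrightarrow> (c *\<^sub>R x, c*a)\<in>G"
    and Gdom: "\<And>x a. (x,a)\<in>G \<Longrightarrow> a \<le> p x"
    and G0G: "G0 \<subseteq> G"
    unfolding goodG_def by blast+
  obtain d0 a0 where d0: "(d0,a0) \<in> G" using ne by auto
  have key: "b - p (e - x0) \<le> p (d + x0) - a" if "(d,a)\<in>G" "(e,b)\<in>G" for d a e b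
  proof -
    have "a + b \<le> p (d + e)" using Gdom[OF Gadd[OF that]] .
    also have "d + e = (d + x0) + (e - x0)" by simp
    also have "p \<dots> \<le> p (d + x0) + p (e - x0)" by (rule p_add)
    finally show ?thesis by simp
  qed
  define W where "W = {b - p (e - x0) | e b. (e,b) \<in> G}"
  define \<xi> where "\<xi> = Sup W"
  have Wne: "W \<noteq> {}" using d0 unfolding W_def by blast
  have Wbdd: "bdd_above W" unfolding W_def bdd_above_def using key d0 by blast
  have xi_ge: "b - p (e - x0) \<le> \<xi>" if "(e,b)\<in>G" for e b
    unfolding \<xi>_def using that Wbdd by (intro cSup_upper) (auto simp: W_def)
  have xi_le: "\<xi> \<le> p (d + x0) - a" if "(d,a)\<in>G" for d a
    unfolding \<xi>_def using Wne by (intro cSup_least) (auto simp: W_def intro: key[OF that])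
  define G' where "G' = {(d + c *\<^sub>R x0, a + c * \<xi>) | d a c. (d,a) \<in> G}"
  have uniq: "c = c' \<and> d = d'" if "(d,a)\<in>G" "(d',a')\<in>G" "d + c *\<^sub>R x0 = d' + c' *\<^sub>R x0" for d a d' a' c c'
  proof (cases "c = c'")
    case True then show ?thesis using that by simp
  next
    case False
    have "(c - c') *\<^sub>R x0 = d' - d" using that(3) by (simp add: algebra_simps)
    then have "(1/(c-c')) *\<^sub>R ((c - c') *\<^sub>R x0) = (1/(c-c')) *\<^sub>R (d' - d)" by simp
    then have "x0 = (1/(c-c')) *\<^sub>R (d' - d)" using False by simp
    also have "(d' - d, a' - a) \<in> G" using Gadd[OF that(2) Gsc[OF that(1), of "-1"]] by simp
    then have "((1/(c-c')) *\<^sub>R (d' - d), (1/(c-c')) * (a' - a)) \<in> G" by (rule Gsc)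
    then have "(1/(c-c')) *\<^sub>R (d' - d) \<in> fst ` G" by force
    finally show ?thesis using x0 by simp
  qed
  have good': "goodG p G0 G'"
    unfolding goodG_def
  proof (intro conjI allI impI)
    show "G0 \<subseteq> G'"
    proof
      fix z assume "z \<in> G0"
      then obtain x a where z: "z = (x,a)" "(x,a) \<in> G" using G0G by (cases z) auto
      then have "z = (x + 0 *\<^sub>R x0, a + 0 * \<xi>) \<and> (x,a) \<in> G" by simp
      then show "z \<in> G'" unfolding G'_def by blast
    qed
  next
    fix x a b assume "(x,a) \<in> G'" "(x,b) \<in> G'"
    then obtain d1 a1 c1 d2 a2 c2 where h: "(d1,a1)\<in>G" "x = d1 + c1 *\<^sub>R x0" "a = a1 + c1*\<xi>"
      "(d2,a2)\<in>G" "x = d2 + c2 *\<^sub>R x0" "b = a2 + c2*\<xi>" unfolding G'_def by blast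
    have "d1 + c1 *\<^sub>R x0 = d2 + c2 *\<^sub>R x0" using h by simp
    with uniq[OF h(1) h(4)] have "c1 = c2" "d1 = d2" by blast+
    with h Gfun show "a = b" by auto
  next
    fix x a y b assume "(x,a) \<in> G'" "(y,b) \<in> G'"
    then obtain d1 a1 c1 d2 a2 c2 where h: "(d1,a1)\<in>G" "x = d1 + c1 *\<^sub>R x0" "a = a1 + c1*\<xi>"
      "(d2,a2)\<in>G" "y = d2 + c2 *\<^sub>R x0" "b = a2 + c2*\<xi>" unfolding G'_def by blast
    have "(d1+d2, a1+a2) \<in> G" using Gadd h by auto
    moreover have "x + y = (d1+d2) + (c1+c2) *\<^sub>R x0" "a + b = (a1+a2) + (c1+c2)*\<xi>"
      using h by (auto simp: algebra_simps)
    ultimately show "(x+y, a+b) \<in> G'" unfolding G'_def by blast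
  next
    fix x a c assume "(x,a) \<in> G'"
    then obtain d1 a1 c1 where h: "(d1,a1)\<in>G" "x = d1 + c1 *\<^sub>R x0" "a = a1 + c1*\<xi>"
      unfolding G'_def by blast
    have "(c *\<^sub>R d1, c*a1) \<in> G" using Gsc h by auto
    moreover have "c *\<^sub>R x = c *\<^sub>R d1 + (c*c1) *\<^sub>R x0" "c*a = c*a1 + (c*c1)*\<xi>"
      using h by (auto simp: algebra_simps)
    ultimately show "(c *\<^sub>R x, c*a) \<in> G'" unfolding G'_def by blast
  next
    fix x a assume "(x,a) \<in> G'"
    then obtain d a1 c where h: "(d,a1)\<in>G" "x = d + c *\<^sub>R x0" "a = a1 + c*\<xi>"
      unfolding G'_def by blast
    show "a \<le> p x"
    proof (cases "c > 0")
      case True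
      have "((1/c) *\<^sub>R d, (1/c)*a1) \<in> G" using Gsc h(1) by blast
      from xi_le[OF this] have "\<xi> \<le> p ((1/c) *\<^sub>R d + x0) - a1/c" by simp
      then have "c * \<xi> \<le> c * p ((1/c) *\<^sub>R d + x0) - a1" using True by (simp add: field_simps)
      also have "c * p ((1/c) *\<^sub>R d + x0) = p (c *\<^sub>R ((1/c) *\<^sub>R d + x0))" using p_scale[OF True] by simp
      also have "c *\<^sub>R ((1/c) *\<^sub>R d + x0) = x" using True h by (simp add: algebra_simps)
      finally show ?thesis using h by simp
    next
      case False
      show ?thesis
      proof (cases "c = 0")
        case True then show ?thesis using h Gdom by simp
      next
        case False2: False
        define k where "k = - c"
        have k: "k > 0" using False False2 unfolding k_def by simp
        have "((1/k) *\<^sub>R d, (1/k)*a1) \<in> G" using Gsc h(1) by blast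
        from xi_ge[OF this] have "a1/k - p ((1/k) *\<^sub>R d - x0) \<le> \<xi>" by simp
        then have "a1 - k * p ((1/k) *\<^sub>R d - x0) \<le> k * \<xi>" using k by (simp add: field_simps)
        also have "k * p ((1/k) *\<^sub>R d - x0) = p (k *\<^sub>R ((1/k) *\<^sub>R d - x0))" using p_scale[OF k] by simp
        also have "k *\<^sub>R ((1/k) *\<^sub>R d - x0) = x" using k h by (simp add: algebra_simps k_def)
        finally show ?thesis using h by (simp add: k_def)
      qed
    qed
  qed
  have sub: "G \<subseteq> G'"
  proof
    fix z assume "z \<in> G" then obtain x a where "z = (x,a)" "(x,a)\<in>G" by (cases z) auto
    then have "z = (x + 0 *\<^sub>R x0, a + 0 * \<xi>) \<and> (x,a) \<in> G" by simp
    then show "z \<in> G'" unfolding G'_def by blast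
  qed
  have "(x0, \<xi>) \<in> G'"
  proof -
    have "(0,0) \<in> G" using Gsc[OF d0, of 0] by simp
    then have "(x0, \<xi>) = (0 + 1 *\<^sub>R x0, 0 + 1 * \<xi>) \<and> (0,0) \<in> G" by simp
    then show ?thesis unfolding G'_def by blast
  qed
  moreover have "(x0, \<xi>) \<notin> G" using x0 by force
  ultimately show ?thesis using good' sub by blast
qed

lemma HB_graph:
  fixes p :: "'a::real_vector \<Rightarrow> real" and G0 :: "('a \<times> real) set"
  assumes p_add: "\<And>x y. p (x + y) \<le> p x + p y"
    and p_scale: "\<And>c x. c > 0 \<Longrightarrow> p (c *\<^sub>R x) = c * p x"
    and g0: "goodG p G0 G0" and ne: "G0 \<noteq> {}"
  shows "\<exists>F. linear F \<and> (\<forall>x a. (x,a)\<in>G0 \<longrightarrow> F x = a) \<and> (\<forall>x. F x \<le> p x)"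
proof -
  let ?A = "{G. goodG p G0 G}"
  have "\<exists>M\<in>?A. \<forall>X\<in>?A. M \<subseteq> X \<longrightarrow> X = M"
  proof (rule Zorn_Lemma2, intro ballI)
    fix C assume C: "C \<in> chains ?A"
    show "\<exists>U\<in>?A. \<forall>X\<in>C. X \<subseteq> U"
    proof (cases "C = {}")
      case True then show ?thesis using g0 by auto
    next
      case False
      have CA: "\<And>X. X \<in> C \<Longrightarrow> goodG p G0 X" using chainsD2[OF C] by auto
      have both: "\<exists>X\<in>C. z1 \<in> X \<and> z2 \<in> X" if z1: "z1 \<in> \<Union>C" and z2: "z2 \<in> \<Union>C" for z1 z2
      proof -
        obtain X1 where "X1\<in>C" "z1\<in>X1" using z1 by blast
        moreover obtain X2 where "X2\<in>C" "z2\<in>X2" using z2 by blast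
        ultimately
        show ?thesis using chainsD[OF C, of X1 X2] by blast
      qed
      have "goodG p G0 (\<Union>C)"
        unfolding goodG_def
      proof (intro conjI allI impI)
        show "G0 \<subseteq> \<Union>C" using False CA unfolding goodG_def by blast
      next
        fix x a b assume "(x,a) \<in> \<Union>C" "(x,b) \<in> \<Union>C"
        then obtain X where "X\<in>C" "(x,a)\<in>X" "(x,b)\<in>X" using both by blast
        then show "a = b" using CA unfolding goodG_def by blast
      next
        fix x a y b assume "(x,a) \<in> \<Union>C" "(y,b) \<in> \<Union>C"
        then obtain X where "X\<in>C" "(x,a)\<in>X" "(y,b)\<in>X" using both by blast
        then show "(x+y,a+b) \<in> \<Union>C" using CA unfolding goodG_def by blast
      next
        fix x a c assume "(x,a) \<in> \<Union>C"
        then obtain X where "X\<in>C" "(x,a)\<in>X" by blast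
        then show "(c *\<^sub>R x, c*a) \<in> \<Union>C" using CA unfolding goodG_def by blast
      next
        fix x a assume "(x,a) \<in> \<Union>C"
        then obtain X where "X\<in>C" "(x,a)\<in>X" by blast
        then show "a \<le> p x" using CA unfolding goodG_def by blast
      qed
      then show ?thesis by blast
    qed
  qed
  then obtain M where M: "goodG p G0 M" and Mmax: "\<And>X. goodG p G0 X \<Longrightarrow> M \<subseteq> X \<Longrightarrow> X = M" by blast
  have Mne: "M \<noteq> {}" using M ne unfolding goodG_def by blast
  have dom: "x \<in> fst ` M" for x
  proof (rule ccontr)
    assume "x \<notin> fst ` M"
    from HB_extend_step[OF p_add p_scale M Mne this] Mmax show False by blast
  qed
  from M have Mfun: "\<And>x a b. (x,a)\<in>M \<Longrightarrow> (x,b)\<in>M \<Longrightarrow> a = b"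
    and Madd: "\<And>x a y b. (x,a)\<in>M \<Longrightarrow> (y,b)\<in>M \<Longrightarrow> (x+y, a+b)\<in>M"
    and Msc: "\<And>x a c. (x,a)\<in>M \<Longrightarrow> (c *\<^sub>R x, c*a)\<in>M"
    and Mdom: "\<And>x a. (x,a)\<in>M \<Longrightarrow> a \<le> p x"
    and G0M: "G0 \<subseteq> M"
    unfolding goodG_def by blast+
  define F where "F x = (THE a. (x,a) \<in> M)" for x
  have FM: "(x, F x) \<in> M" for x
  proof -
    obtain a where xa: "(x,a) \<in> M" using dom[of x] by force
    show ?thesis unfolding F_def by (rule theI[of _ a]) (use Mfun xa in blast)+
  qed
  have Feq: "(x,a) \<in> M \<Longrightarrow> F x = a" for x a using Mfun FM by blast
  have "linear F"
  proof (rule linearI)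
    fix x y show "F (x + y) = F x + F y" using Feq[OF Madd[OF FM FM]] .
  next
    fix c x show "F (c *\<^sub>R x) = c *\<^sub>R F x" using Feq[OF Msc[OF FM]] by simp
  qed
  moreover have "\<forall>x a. (x,a)\<in>G0 \<longrightarrow> F x = a" using Feq G0M by blast
  moreover have "\<forall>x. F x \<le> p x" using Mdom FM by blast
  ultimately show ?thesis by blast
qed

lemma HB_norming:
  fixes w :: "'a::real_normed_vector"
  shows "\<exists>g. bounded_linear g \<and> onorm g \<le> 1 \<and> g w = norm w \<and> (\<forall>x. \<bar>g x\<bar> \<le> norm x)"
proof -
  let ?G0 = "{(c *\<^sub>R w, c * norm w) | c. True}"
  have "goodG norm ?G0 ?G0"
    unfolding goodG_def
  proof (intro conjI allI impI subset_refl)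
    fix x a b assume "(x,a) \<in> ?G0" "(x,b) \<in> ?G0"
    then obtain c c' where "x = c *\<^sub>R w" "a = c * norm w" "x = c' *\<^sub>R w" "b = c' * norm w" by blast
    then show "a = b" by (cases "w = 0") (auto dest: scaleR_right_imp_eq)
  next
    fix x a y b assume "(x,a) \<in> ?G0" "(y,b) \<in> ?G0"
    then obtain c c' where "x = c *\<^sub>R w" "a = c * norm w" "y = c' *\<^sub>R w" "b = c' * norm w" by auto
    then show "(x+y,a+b) \<in> ?G0" by (auto intro!: exI[of _ "c+c'"] simp: algebra_simps)
  next
    fix x a c assume "(x,a) \<in> ?G0"
    then obtain c' where "x = c' *\<^sub>R w" "a = c' * norm w" by auto
    then show "(c *\<^sub>R x, c*a) \<in> ?G0" by (auto intro!: exI[of _ "c*c'"])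
  next
    fix x a assume "(x,a) \<in> ?G0"
    then obtain c where "x = c *\<^sub>R w" "a = c * norm w" by auto
    then show "a \<le> norm x" by (simp add: mult_right_mono)
  qed
  moreover have "?G0 \<noteq> {}" by auto
  ultimately obtain F where F: "linear F" "\<forall>x a. (x,a)\<in>?G0 \<longrightarrow> F x = a" "\<forall>x. F x \<le> norm x"
    using HB_graph[of norm ?G0] by (auto intro: norm_triangle_ineq)
  have abs: "\<bar>F x\<bar> \<le> norm x" for x
  proof -
    have "F (- x) = - F x" using F(1) by (simp add: linear_neg)
    then show ?thesis using F(3)[rule_format, of x] F(3)[rule_format, of "-x"] by auto
  qed
  have bl: "bounded_linear F"
    using F(1) abs by (intro bounded_linear_intro[where K=1]) (auto simp: linear_add linear_scale)
  have "onorm F \<le> 1" by (rule onorm_bound) (use abs in auto)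
  moreover have "F w = norm w"
  proof -
    have "(w, norm w) = (1 *\<^sub>R w, 1 * norm w)" by simp
    then have "(w, norm w) \<in> ?G0" by blast
    then show ?thesis using F(2) by blast
  qed
  ultimately show ?thesis using bl abs by blast
qed

lemma dual_separates:
  fixes v w :: "'a::real_normed_vector"
  assumes "\<forall>g\<in>(dual::('a\<Rightarrow>real) set). g v = g w"
  shows "v = w"
proof -
  obtain g where g: "bounded_linear g" "g (v - w) = norm (v - w)" using HB_norming by blast
  then have "g v - g w = norm (v - w)" by (simp add: linear_diff bounded_linear.linear)
  moreover have "g v = g w" using assms g by (simp add: dual_def)
  ultimately show ?thesis by simp
qed

lemma HB_subspace_dist:
  fixes X :: "'a::real_normed_vector set"
  assumes X: "subspace X" "closed X" and v: "v \<notin> X"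
  shows "\<exists>g\<in>(dual::('a\<Rightarrow>real) set). (\<forall>x\<in>X. g x = 0) \<and> g v \<noteq> 0"
proof -
  define \<delta> where "\<delta> = infdist v X"
  have Xne: "X \<noteq> {}" using X(1) subspace_0 by blast
  have dpos: "\<delta> > 0" unfolding \<delta>_def using infdist_pos_not_in_closed[OF X(2) Xne v] .
  let ?G0 = "{(y + c *\<^sub>R v, c * \<delta>) | y c. y \<in> X}"
  have uniq: "c = c' \<and> y = y'" if "y \<in> X" "y' \<in> X" "y + c *\<^sub>R v = y' + c' *\<^sub>R v" for y y' c c'
  proof (cases "c = c'")
    case True then show ?thesis using that by simp
  next
    case False
    have "(c - c') *\<^sub>R v = y' - y" using that(3) by (simp add: algebra_simps)
    then have "(1/(c-c')) *\<^sub>R ((c - c') *\<^sub>R v) = (1/(c-c')) *\<^sub>R (y' - y)" by simp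
    then have "v = (1/(c-c')) *\<^sub>R (y' - y)" using False by simp
    moreover have "(1/(c-c')) *\<^sub>R (y' - y) \<in> X" using X(1) that by (intro subspace_scale subspace_diff) auto
    ultimately show ?thesis using v by simp
  qed
  have "goodG norm ?G0 ?G0"
    unfolding goodG_def
  proof (intro conjI allI impI subset_refl)
    fix x a b assume "(x,a) \<in> ?G0" "(x,b) \<in> ?G0"
    then obtain y c y' c' where h: "y\<in>X" "y'\<in>X" "x = y + c *\<^sub>R v" "a = c * \<delta>" "x = y' + c' *\<^sub>R v" "b = c' * \<delta>" by blast
    have "c = c'" using uniq[OF h(1) h(2)] h(3) h(5) by simp
    then show "a = b" using h by simp
  next
    fix x a z b assume "(x,a) \<in> ?G0" "(z,b) \<in> ?G0"
    then obtain y c y' c' where h: "y\<in>X" "y'\<in>X" "x = y + c *\<^sub>R v" "a = c * \<delta>" "z = y' + c' *\<^sub>R v" "b = c' * \<delta>" by auto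
    have "y + y' \<in> X" using X(1) h by (simp add: subspace_add)
    moreover have "x + z = (y + y') + (c + c') *\<^sub>R v" "a + b = (c+c') * \<delta>" using h by (auto simp: algebra_simps)
    ultimately show "(x+z,a+b) \<in> ?G0" by blast
  next
    fix x a k assume "(x,a) \<in> ?G0"
    then obtain y c where h: "y\<in>X" "x = y + c *\<^sub>R v" "a = c * \<delta>" by auto
    have "k *\<^sub>R y \<in> X" using X(1) h by (simp add: subspace_scale)
    moreover have "k *\<^sub>R x = k *\<^sub>R y + (k*c) *\<^sub>R v" "k * a = (k*c) * \<delta>" using h by (auto simp: algebra_simps)
    ultimately show "(k *\<^sub>R x, k*a) \<in> ?G0" by blast
  next
    fix x a assume "(x,a) \<in> ?G0"
    then obtain y c where h: "y\<in>X" "x = y + c *\<^sub>R v" "a = c * \<delta>" by auto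
    show "a \<le> norm x"
    proof (cases "c > 0")
      case True
      have "(-(1/c)) *\<^sub>R y \<in> X" using subspace_scale[OF X(1) h(1)] by blast
      then have "\<delta> \<le> dist v ((-(1/c)) *\<^sub>R y)" unfolding \<delta>_def by (rule infdist_le)
      also have "dist v ((-(1/c)) *\<^sub>R y) = norm ((1/c) *\<^sub>R x)" using True h
        by (simp add: dist_norm algebra_simps)
      also have "\<dots> = norm x / c" using True by simp
      finally show ?thesis using True h by (simp add: field_simps)
    next
      case False
      then have "c * \<delta> \<le> 0" using dpos by (simp add: mult_nonpos_nonneg)
      then show ?thesis using h by (meson norm_ge_zero order_trans)
    qed
  qed
  moreover have "?G0 \<noteq> {}" using Xne by blast
  ultimately obtain F where F: "linear F" "\<forall>x a. (x,a)\<in>?G0 \<longrightarrow> F x = a" "\<forall>x. F x \<le> norm x"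
    using HB_graph[of norm ?G0] by (auto intro: norm_triangle_ineq)
  have abs: "\<bar>F x\<bar> \<le> norm x" for x
  proof -
    have "F (- x) = - F x" using F(1) by (simp add: linear_neg)
    then show ?thesis using F(3)[rule_format, of x] F(3)[rule_format, of "-x"] by auto
  qed
  have bl: "bounded_linear F"
    using F(1) abs by (intro bounded_linear_intro[where K=1]) (auto simp: linear_add linear_scale)
  have "\<forall>x\<in>X. F x = 0"
  proof
    fix x assume "x \<in> X"
    then have "(x, 0) = (x + 0 *\<^sub>R v, 0 * \<delta>)" by simp
    then have "(x, 0) \<in> ?G0" using \<open>x \<in> X\<close> by blast
    then show "F x = 0" using F(2) by blast
  qed
  moreover have "F v = \<delta>"
  proof -
    have "(v, \<delta>) = (0 + 1 *\<^sub>R v, 1 * \<delta>)" by simp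
    moreover have "(0::'a) \<in> X" using X(1) subspace_0 by blast
    ultimately have "(v, \<delta>) \<in> ?G0" by blast
    then show ?thesis using F(2) by blast
  qed
  ultimately show ?thesis using bl dpos by (auto simp: dual_def)
qed



lemma dual_abs_le:
  assumes "g \<in> dual" shows "\<bar>g x\<bar> \<le> onorm g * norm x"
  using onorm[of g x] assms by (simp add: dual_def)

lemma dual_linear: "g \<in> dual \<Longrightarrow> linear g"
  by (simp add: dual_def bounded_linear.linear)

lemma ABS_summable:
  fixes c :: "nat \<Rightarrow> real"
  assumes "\<And>A. summable (\<lambda>n. indicator A n * c n)"
  shows "summable (\<lambda>n. \<bar>c n\<bar>)"
proof -
  let ?P = "{n. c n \<ge> 0}"
  have "(\<lambda>n. \<bar>c n\<bar>) = (\<lambda>n. indicator ?P n * c n - indicator (- ?P) n * c n)"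
    by (auto simp: fun_eq_iff indicator_def)
  then show ?thesis using summable_diff[OF assms assms] by simp
qed

lemma tail_small:
  fixes f :: "nat \<Rightarrow> real"
  assumes "summable (\<lambda>j. \<bar>f j\<bar>)" "\<delta> > 0"
  shows "\<exists>K. \<forall>F. finite F \<longrightarrow> F \<subseteq> {K..} \<longrightarrow> (\<Sum>j\<in>F. \<bar>f j\<bar>) \<le> \<delta>"
proof -
  obtain N where N: "\<And>m n. m \<ge> N \<Longrightarrow> norm (sum (\<lambda>j. \<bar>f j\<bar>) {m..<n}) < \<delta>"
    using assms(1)[unfolded summable_Cauchy] assms(2) by blast
  have "(\<Sum>j\<in>F. \<bar>f j\<bar>) \<le> \<delta>" if F: "finite F" "F \<subseteq> {N..}" for F
  proof -
    have "F \<subseteq> {N..<Suc (Max (insert N F))}"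
    proof
      fix j assume "j \<in> F"
      then have "j \<le> Max (insert N F)" using F(1) by (intro Max_ge) auto
      then show "j \<in> {N..<Suc (Max (insert N F))}" using F(2) \<open>j \<in> F\<close> by auto
    qed
    then have "(\<Sum>j\<in>F. \<bar>f j\<bar>) \<le> (\<Sum>j\<in>{N..<Suc (Max (insert N F))}. \<bar>f j\<bar>)"
      by (intro sum_mono2) auto
    also have "\<dots> \<le> \<delta>" using N[of N "Suc (Max (insert N F))"] by simp
    finally show ?thesis .
  qed
  then show ?thesis by blast
qed

lemma sums_tail_bound_gen:
  fixes h :: "nat \<Rightarrow> real"
  assumes s: "h sums V" and t: "\<And>n. n \<ge> B \<Longrightarrow> \<bar>\<Sum>j\<in>{B..<n}. h j\<bar> \<le> \<delta>"
  shows "\<bar>V - (\<Sum>j<B. h j)\<bar> \<le> \<delta>"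
proof -
  have lim: "(\<lambda>n. \<bar>(\<Sum>j<n. h j) - (\<Sum>j<B. h j)\<bar>) \<longlonglongrightarrow> \<bar>V - (\<Sum>j<B. h j)\<bar>"
    by (intro tendsto_rabs tendsto_diff tendsto_const) (use s in \<open>simp add: sums_def\<close>)
  have "\<bar>(\<Sum>j<n. h j) - (\<Sum>j<B. h j)\<bar> \<le> \<delta>" if "n \<ge> B" for n
  proof -
    have "(\<Sum>j\<in>{0..<B}. h j) + (\<Sum>j\<in>{B..<n}. h j) = (\<Sum>j\<in>{0..<n}. h j)"
      by (rule sum.atLeastLessThan_concat) (use that in auto)
    then have "(\<Sum>j<n. h j) - (\<Sum>j<B. h j) = (\<Sum>j\<in>{B..<n}. h j)"
      by (simp add: atLeast0LessThan)
    then show ?thesis using t[OF that] by simp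
  qed
  then show ?thesis by (intro Lim_bounded[OF lim, of B]) auto
qed

lemma sums_tail_bound:
  fixes f :: "nat \<Rightarrow> real"
  assumes s: "(\<lambda>j. indicator A j * f j) sums V"
    and t: "\<forall>F. finite F \<longrightarrow> F \<subseteq> {B..} \<longrightarrow> (\<Sum>j\<in>F. \<bar>f j\<bar>) \<le> \<delta>"
  shows "\<bar>V - (\<Sum>j<B. indicator A j * f j)\<bar> \<le> \<delta>"
proof (rule sums_tail_bound_gen[OF s])
  fix n assume "n \<ge> B"
  have "\<bar>\<Sum>j\<in>{B..<n}. indicator A j * f j\<bar> \<le> (\<Sum>j\<in>{B..<n}. \<bar>indicator A j * f j\<bar>)" by (rule sum_abs)
  also have "\<dots> \<le> (\<Sum>j\<in>{B..<n}. \<bar>f j\<bar>)" by (intro sum_mono) (auto simp: indicator_def)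
  also have "\<dots> \<le> \<delta>"
  proof -
    have "{B..<n} \<subseteq> {B..}" by auto
    then show ?thesis using t by simp
  qed
  finally show "\<bar>\<Sum>j\<in>{B..<n}. indicator A j * f j\<bar> \<le> \<delta>" .
qed

lemma blocks_sum:
  fixes f :: "nat \<Rightarrow> 'a::comm_monoid_add"
  assumes mono: "incseq Kb"
    and Nk: "\<And>k. Nk k \<subseteq> {Kb k..<Kb (Suc k)}"
  shows "(\<Sum>j\<in>(\<Union>k\<in>Q. Nk k) \<inter> {..<Kb M}. f j) = (\<Sum>k\<in>Q \<inter> {..<M}. \<Sum>j\<in>Nk k. f j)"
proof -
  have eq: "(\<Union>k\<in>Q. Nk k) \<inter> {..<Kb M} = (\<Union>k\<in>Q \<inter> {..<M}. Nk k)"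
  proof (intro equalityI subsetI)
    fix j assume "j \<in> (\<Union>k\<in>Q. Nk k) \<inter> {..<Kb M}"
    then obtain k where k: "k \<in> Q" "j \<in> Nk k" "j < Kb M" by auto
    have "k < M"
    proof (rule ccontr)
      assume "\<not> k < M" then have "Kb M \<le> Kb k" using mono by (simp add: incseq_def)
      with k Nk[of k] show False by auto
    qed
    with k show "j \<in> (\<Union>k\<in>Q \<inter> {..<M}. Nk k)" by auto
  next
    fix j assume "j \<in> (\<Union>k\<in>Q \<inter> {..<M}. Nk k)"
    then obtain k where k: "k \<in> Q" "k < M" "j \<in> Nk k" by auto
    then have "Kb (Suc k) \<le> Kb M" using mono by (simp add: incseq_def)
    with k Nk[of k] show "j \<in> (\<Union>k\<in>Q. Nk k) \<inter> {..<Kb M}" by auto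
  qed
  have fin: "finite (Nk k)" for k using Nk[of k] finite_subset by blast
  have disj: "Nk k \<inter> Nk k' = {}" if "k \<noteq> k'" for k k'
  proof -
    { fix a b :: nat assume "a < b"
      then have "Kb (Suc a) \<le> Kb b" using mono by (simp add: incseq_def)
      moreover
      { fix x assume x: "x \<in> Nk a" "x \<in> Nk b"
        then have "x < Kb (Suc a)" "Kb b \<le> x" using Nk[of a] Nk[of b] by auto }
      ultimately have "Nk a \<inter> Nk b = {}" by fastforce }
    note * = this
    show ?thesis
    proof (cases "k < k'")
      case True then show ?thesis using * by blast
    next
      case False then have "k' < k" using that by simp
      then show ?thesis using *[of k' k] by blast
    qed
  qed
  show ?thesis unfolding eq
    by (rule sum.UNION_disjoint) (auto simp: fin disj)
qed

lemma diag_subseq: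
  fixes G :: "nat \<Rightarrow> 'e \<Rightarrow> real" and x :: "nat \<Rightarrow> 'e"
  assumes bnd: "\<And>k j. \<bar>G k (x j)\<bar> \<le> Bd j"
  shows "\<exists>\<phi>. strict_mono \<phi> \<and> (\<forall>j. convergent (\<lambda>i. G (\<phi> i) (x j)))"
proof -
  interpret subseqs "\<lambda>j s. convergent (\<lambda>i. G (s i) (x j))"
  proof
    fix n and s :: "nat \<Rightarrow> nat" assume "strict_mono s"
    have "bounded (range (\<lambda>i. G (s i) (x n)))"
      using bnd by (intro boundedI[of _ "Bd n"]) auto
    from bounded_imp_convergent_subsequence[OF this] obtain l r where
      "strict_mono r" "((\<lambda>i. G (s i) (x n)) \<circ> r) \<longlonglongrightarrow> l" by blast
    then show "\<exists>r'. strict_mono r' \<and> convergent (\<lambda>i. G ((s \<circ> r') i) (x n))"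
      by (auto simp: convergent_def o_def)
  qed
  have "convergent (\<lambda>i. G (diagseq i) (x j))" for j
  proof -
    have "convergent (\<lambda>i. G ((diagseq \<circ> (+) (Suc j)) i) (x j))"
    proof (rule diagseq_holds)
      fix r s n assume "strict_mono (r::nat\<Rightarrow>nat)" "convergent (\<lambda>i. G (s i) (x n))"
      then show "convergent (\<lambda>i. G ((s \<circ> r) i) (x n))"
        using convergent_subseq_convergent[of "\<lambda>i. G (s i) (x n)" r] by (simp add: o_def)
    qed
    then have "convergent (\<lambda>i. G (diagseq (i + Suc j)) (x j))" by (simp add: o_def add.commute)
    then show ?thesis using convergent_ignore_initial_segment[of "\<lambda>i. G (diagseq i) (x j)" "Suc j"] by simp
  qed
  then show ?thesis using subseq_diagseq by blast
qed

lemma closure_subspace: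
  fixes S :: "'a::real_normed_vector set"
  assumes "subspace S" shows "subspace (closure S)"
  unfolding subspace_def
proof (intro conjI ballI allI)
  show "0 \<in> closure S" using assms closure_subset subspace_0 by blast
next
  fix x y assume "x \<in> closure S" "y \<in> closure S"
  then obtain a b where "\<forall>n. a n \<in> S" "a \<longlonglongrightarrow> x" "\<forall>n. b n \<in> S" "b \<longlonglongrightarrow> y"
    unfolding closure_sequential by blast
  then show "x + y \<in> closure S" unfolding closure_sequential
    by (intro exI[of _ "\<lambda>n. a n + b n"]) (auto intro: tendsto_add subspace_add[OF assms])
next
  fix c x assume "x \<in> closure S"
  then obtain a where "\<forall>n. a n \<in> S" "a \<longlonglongrightarrow> x" unfolding closure_sequential by blast
  then show "c *\<^sub>R x \<in> closure S" unfolding closure_sequential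
    by (intro exI[of _ "\<lambda>n. c *\<^sub>R a n"]) (auto intro: tendsto_scaleR subspace_scale[OF assms])
qed

lemma conv_closure_span:
  fixes g :: "nat \<Rightarrow> 'e::real_normed_vector \<Rightarrow> real"
  assumes gd: "\<And>k. g k \<in> dual" "\<And>k. onorm (g k) \<le> 1"
    and conv: "\<And>j. convergent (\<lambda>i. g i (x j))"
    and v: "v \<in> closure (span (range x))"
  shows "convergent (\<lambda>i. g i v)"
proof -
  have lin: "linear (g k)" for k using gd dual_linear by blast
  have spanc: "convergent (\<lambda>i. g i u)" if "u \<in> span (range x)" for u
    using that
  proof (induct rule: span_induct)
    case base
    show ?case
    proof -
      have "subspace {u. convergent (\<lambda>i. g i u)}"
        unfolding subspace_def
      proof (intro conjI ballI allI)
        show "0 \<in> {u. convergent (\<lambda>i. g i u)}" using lin by (simp add: linear_0 convergent_const)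
      next
        fix a b assume "a \<in> {u. convergent (\<lambda>i. g i u)}" "b \<in> {u. convergent (\<lambda>i. g i u)}"
        then show "a + b \<in> {u. convergent (\<lambda>i. g i u)}"
          using lin by (simp add: linear_add convergent_add)
      next
        fix c a assume "a \<in> {u. convergent (\<lambda>i. g i u)}"
        then show "c *\<^sub>R a \<in> {u. convergent (\<lambda>i. g i u)}"
          using lin by (auto simp: linear_scale intro!: convergent_mult convergent_const)
      qed
      then show ?thesis by simp
    qed
  next
    case (step u) then show ?case using conv by auto
  qed
  show ?thesis
  proof (rule real_Cauchy_convergent, rule CauchyI)
    fix e :: real assume e: "e > 0"
    from v obtain u where u: "u \<in> span (range x)" "dist u v < e/3"
      using closure_approachable[of v "span (range x)"] e by (metis divide_pos_pos zero_less_numeral)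
    have "Cauchy (\<lambda>i. g i u)" using spanc[OF u(1)] by (simp add: Cauchy_convergent_iff)
    then obtain M where M: "\<And>m n. m \<ge> M \<Longrightarrow> n \<ge> M \<Longrightarrow> norm (g m u - g n u) < e/3"
      using e by (meson CauchyD divide_pos_pos zero_less_numeral)
    have gb: "\<bar>g k a - g k b\<bar> \<le> norm (a - b)" for k a b
    proof -
      have "\<bar>g k (a - b)\<bar> \<le> onorm (g k) * norm (a - b)" using dual_abs_le[OF gd(1)] .
      also have "\<dots> \<le> 1 * norm (a - b)" using gd(2)[of k] by (intro mult_right_mono) auto
      finally show ?thesis using lin by (simp add: linear_diff)
    qed
    have "norm (g m v - g n v) < e" if "m \<ge> M" "n \<ge> M" for m n
    proof -
      have "\<bar>g m v - g n v\<bar> \<le> \<bar>g m v - g m u\<bar> + \<bar>g m u - g n u\<bar> + \<bar>g n u - g n v\<bar>" by linarith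
      also have "\<dots> < e/3 + e/3 + e/3"
        using gb[of m v u] gb[of n u v] M[OF that] u(2) by (simp add: dist_norm norm_minus_commute)
      finally show ?thesis by simp
    qed
    then show "\<exists>M. \<forall>m\<ge>M. \<forall>n\<ge>M. norm (g m v - g n v) < e" by blast
  qed
qed

lemma HB_limit_ext:
  fixes g :: "nat \<Rightarrow> 'e::real_normed_vector \<Rightarrow> real"
  assumes gd: "\<And>k. g k \<in> dual" "\<And>k. onorm (g k) \<le> 1"
    and X: "subspace X" and conv: "\<And>v. v \<in> X \<Longrightarrow> convergent (\<lambda>i. g i v)"
  shows "\<exists>F\<in>dual. \<forall>v\<in>X. (\<lambda>i. g i v) \<longlonglongrightarrow> F v"
proof -
  define L where "L v = lim (\<lambda>i. g i v)" for v
  have LL: "(\<lambda>i. g i v) \<longlonglongrightarrow> L v" if "v \<in> X" for v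
    using conv[OF that] unfolding L_def by (simp add: convergent_LIMSEQ_iff)
  have lin: "linear (g k)" for k using gd dual_linear by blast
  let ?G0 = "{(v, L v) | v. v \<in> X}"
  have "goodG norm ?G0 ?G0"
    unfolding goodG_def
  proof (intro conjI allI impI subset_refl)
    fix v a b assume "(v,a) \<in> ?G0" "(v,b) \<in> ?G0" then show "a = b" by auto
  next
    fix v a w b assume "(v,a) \<in> ?G0" "(w,b) \<in> ?G0"
    then have h: "v \<in> X" "w \<in> X" "a = L v" "b = L w" by auto
    have "(\<lambda>i. g i (v + w)) \<longlonglongrightarrow> L v + L w"
      using tendsto_add[OF LL[OF h(1)] LL[OF h(2)]] lin by (simp add: linear_add)
    moreover have "(\<lambda>i. g i (v + w)) \<longlonglongrightarrow> L (v + w)" using LL X h by (simp add: subspace_add)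
    ultimately have "L (v + w) = a + b" using h LIMSEQ_unique by blast
    then show "(v + w, a + b) \<in> ?G0" using X h by (auto simp: subspace_add)
  next
    fix v a c assume "(v,a) \<in> ?G0"
    then have h: "v \<in> X" "a = L v" by auto
    have "(\<lambda>i. g i (c *\<^sub>R v)) \<longlonglongrightarrow> c * L v"
      using tendsto_mult[OF tendsto_const[of c] LL[OF h(1)]] lin by (simp add: linear_scale)
    moreover have "(\<lambda>i. g i (c *\<^sub>R v)) \<longlonglongrightarrow> L (c *\<^sub>R v)" using LL X h by (simp add: subspace_scale)
    ultimately have "L (c *\<^sub>R v) = c * a" using h LIMSEQ_unique by blast
    then show "(c *\<^sub>R v, c * a) \<in> ?G0" using X h by (auto simp: subspace_scale)
  next
    fix v a assume "(v,a) \<in> ?G0"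
    then have h: "v \<in> X" "a = L v" by auto
    have "g i v \<le> norm v" for i
    proof -
      have "\<bar>g i v\<bar> \<le> onorm (g i) * norm v" using dual_abs_le[OF gd(1)] .
      also have "\<dots> \<le> 1 * norm v" using gd(2)[of i] by (intro mult_right_mono) auto
      finally show ?thesis by simp
    qed
    then show "a \<le> norm v" using h Lim_bounded[OF LL[OF h(1)], of 0] by auto
  qed
  moreover have "?G0 \<noteq> {}" using X subspace_0 by blast
  ultimately obtain F where F: "linear F" "\<forall>x a. (x,a)\<in>?G0 \<longrightarrow> F x = a" "\<forall>x. F x \<le> norm x"
    using HB_graph[of norm ?G0] by (auto intro: norm_triangle_ineq)
  have abs: "\<bar>F x\<bar> \<le> norm x" for x
  proof -
    have "F (- x) = - F x" using F(1) by (simp add: linear_neg)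
    then show ?thesis using F(3)[rule_format, of x] F(3)[rule_format, of "-x"] by auto
  qed
  have bl: "bounded_linear F"
    using F(1) abs by (intro bounded_linear_intro[where K=1]) (auto simp: linear_add linear_scale)
  have "\<forall>v\<in>X. (\<lambda>i. g i v) \<longlonglongrightarrow> F v"
    using F(2) LL by auto
  then show ?thesis using bl by (auto simp: dual_def)
qed

lemma split_half:
  fixes g :: "'a \<Rightarrow> real"
  assumes "finite F" "(\<Sum>j\<in>F. \<bar>g j\<bar>) > e" "e \<ge> 0"
  shows "\<exists>N\<subseteq>F. N \<noteq> {} \<and> \<bar>\<Sum>j\<in>N. g j\<bar> > e/2"
proof -
  let ?P = "{j\<in>F. g j \<ge> 0}" and ?Q = "{j\<in>F. \<not> g j \<ge> 0}"
  have PQ: "?P \<union> ?Q = F" by auto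
  have "(\<Sum>j\<in>?P \<union> ?Q. \<bar>g j\<bar>) = (\<Sum>j\<in>?P. \<bar>g j\<bar>) + (\<Sum>j\<in>?Q. \<bar>g j\<bar>)"
    by (rule sum.union_disjoint) (use assms(1) in auto)
  then have e1: "(\<Sum>j\<in>F. \<bar>g j\<bar>) = (\<Sum>j\<in>?P. \<bar>g j\<bar>) + (\<Sum>j\<in>?Q. \<bar>g j\<bar>)"
    unfolding PQ .
  have e2: "(\<Sum>j\<in>?P. \<bar>g j\<bar>) = (\<Sum>j\<in>?P. g j)" by (intro sum.cong) auto
  have e3: "(\<Sum>j\<in>?Q. \<bar>g j\<bar>) = (\<Sum>j\<in>?Q. - g j)" by (intro sum.cong) auto
  have e4: "(\<Sum>j\<in>?Q. - g j) = - (\<Sum>j\<in>?Q. g j)" by (rule sum_negf)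
  have eq: "(\<Sum>j\<in>F. \<bar>g j\<bar>) = (\<Sum>j\<in>?P. g j) - (\<Sum>j\<in>?Q. g j)"
    using e1 e2 e3 e4 by linarith
  have p: "(\<Sum>j\<in>?P. g j) \<ge> 0" by (intro sum_nonneg) auto
  have q: "(\<Sum>j\<in>?Q. g j) \<le> 0" by (intro sum_nonpos) auto
  show ?thesis
  proof (cases "(\<Sum>j\<in>?P. g j) > e/2")
    case True
    have "?P \<noteq> {}"
    proof
      assume "?P = {}" then have "(\<Sum>j\<in>?P. g j) = 0" by (simp only: sum.empty)
      with True assms(3) show False by simp
    qed
    moreover have "?P \<subseteq> F" by blast
    moreover have "\<bar>\<Sum>j\<in>?P. g j\<bar> > e/2" using True p by simp
    ultimately show ?thesis by (intro exI[of _ ?P] conjI)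
  next
    case False
    then have Qb: "- (\<Sum>j\<in>?Q. g j) > e/2" using eq assms(2) by linarith
    have "?Q \<noteq> {}"
    proof
      assume "?Q = {}" then have "(\<Sum>j\<in>?Q. g j) = 0" by (simp only: sum.empty)
      with Qb assms(3) show False by simp
    qed
    moreover have "?Q \<subseteq> F" by blast
    moreover have "\<bar>\<Sum>j\<in>?Q. g j\<bar> > e/2" using Qb q by simp
    ultimately show ?thesis by (intro exI[of _ ?Q] conjI)
  qed
qed

lemma OP:
  fixes x :: "nat \<Rightarrow> 'e::banach"
  assumes sub: "\<And>A. \<exists>v. \<forall>g\<in>dual. (\<lambda>j. indicator A j * g (x j)) sums g v"
  shows "\<forall>\<epsilon>>0. \<exists>K. \<forall>g\<in>dual. onorm g \<le> 1 \<longrightarrow> (\<forall>F. finite F \<longrightarrow> F \<subseteq> {K..} \<longrightarrow> (\<Sum>j\<in>F. \<bar>g (x j)\<bar>) \<le> \<epsilon>)"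
proof (rule ccontr)
  assume "\<not> ?thesis"
  then obtain \<epsilon> where \<epsilon>: "\<epsilon> > 0" and nK: "\<And>K. \<not> (\<forall>g\<in>dual. onorm g \<le> 1 \<longrightarrow> (\<forall>F. finite F \<longrightarrow> F \<subseteq> {K..} \<longrightarrow> (\<Sum>j\<in>F. \<bar>g (x j)\<bar>) \<le> \<epsilon>))"
    by blast
  have bad: "\<exists>g\<in>dual. onorm g \<le> 1 \<and> (\<exists>F. finite F \<and> F \<subseteq> {K..} \<and> (\<Sum>j\<in>F. \<bar>g (x j)\<bar>) > \<epsilon>)" for K
    using nK[of K] by (auto simp: not_le)
  have summ: "summable (\<lambda>j. \<bar>g (x j)\<bar>)" if "g \<in> dual" for g
  proof -
    have "summable (\<lambda>j. indicator A j * g (x j))" for A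
      using sub[of A] that sums_summable by blast
    then show ?thesis by (rule ABS_summable)
  qed
  have bad2: "\<exists>g N. g \<in> dual \<and> onorm g \<le> 1 \<and> finite N \<and> N \<subseteq> {K..} \<and> N \<noteq> {} \<and> \<bar>\<Sum>j\<in>N. g (x j)\<bar> > \<epsilon>/2" for K
  proof -
    obtain g F where gF: "g \<in> dual" "onorm g \<le> 1" "finite F" "F \<subseteq> {K..}" "(\<Sum>j\<in>F. \<bar>g (x j)\<bar>) > \<epsilon>"
      using bad[of K] by blast
    obtain N where N: "N \<subseteq> F" "N \<noteq> {}" "\<bar>\<Sum>j\<in>N. g (x j)\<bar> > \<epsilon>/2"
      using split_half[OF gF(3) gF(5)] \<epsilon> by auto
    have "finite N" using N(1) gF(3) finite_subset by blast
    moreover have "N \<subseteq> {K..}" using N(1) gF(4) by blast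
    ultimately show ?thesis using gF(1,2) N(2,3) by blast
  qed
  obtain gg NN where ggNN: "\<And>K. gg K \<in> dual \<and> onorm (gg K) \<le> 1 \<and> finite (NN K) \<and> NN K \<subseteq> {K..} \<and> NN K \<noteq> {} \<and> \<bar>\<Sum>j\<in>NN K. gg K (x j)\<bar> > \<epsilon>/2"
    using bad2 by metis
  define Kb where "Kb = rec_nat (0::nat) (\<lambda>_ K. Suc (Max (NN K)))"
  have KbS: "Kb (Suc k) = Suc (Max (NN (Kb k)))" for k by (simp add: Kb_def)
  define G where "G k = gg (Kb k)" for k
  define Nk where "Nk k = NN (Kb k)" for k
  have Gd: "G k \<in> dual" "onorm (G k) \<le> 1" for k using ggNN unfolding G_def by auto
  have Nk_fin: "finite (Nk k)" and Nk_ne: "Nk k \<noteq> {}" and Nk_ge: "Nk k \<subseteq> {Kb k..}" for k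
    using ggNN unfolding Nk_def by auto
  have Nk_sub: "Nk k \<subseteq> {Kb k..<Kb (Suc k)}" for k
  proof
    fix j assume j: "j \<in> Nk k"
    have "j \<le> Max (Nk k)" using Nk_fin j by (rule Max_ge)
    then show "j \<in> {Kb k..<Kb (Suc k)}" using j Nk_ge[of k] by (auto simp: KbS Nk_def)
  qed
  have Kb_mono: "strict_mono Kb"
    unfolding strict_mono_Suc_iff
  proof
    fix k
    obtain j where "j \<in> Nk k" using Nk_ne by blast
    then show "Kb k < Kb (Suc k)" using Nk_sub[of k] by auto
  qed
  define z where "z k = (\<Sum>j\<in>Nk k. x j)" for k
  have Gsum: "g (z k) = (\<Sum>j\<in>Nk k. g (x j))" if "g \<in> dual" for g k
    unfolding z_def using dual_linear[OF that] by (simp add: linear_sum)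
  have diagbig: "\<bar>G k (z k)\<bar> > \<epsilon>/2" for k
    using ggNN[of "Kb k"] Gsum[OF Gd(1)] unfolding G_def Nk_def by simp
  have bndG: "\<bar>G k (x j)\<bar> \<le> norm (x j)" for k j
  proof -
    have "\<bar>G k (x j)\<bar> \<le> onorm (G k) * norm (x j)" using dual_abs_le[OF Gd(1)] .
    also have "\<dots> \<le> 1 * norm (x j)" using Gd(2)[of k] by (intro mult_right_mono) auto
    finally show ?thesis by simp
  qed
  obtain \<phi> where \<phi>: "strict_mono \<phi>" "\<And>j. convergent (\<lambda>i. G (\<phi> i) (x j))"
    using diag_subseq[of G x "\<lambda>j. norm (x j)"] bndG by blast
  define X where "X = closure (span (range x))"
  have Xsub: "subspace X" unfolding X_def by (intro closure_subspace subspace_span)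
  have Xcl: "closed X" unfolding X_def by simp
  have xX: "x j \<in> X" for j
  proof -
    have "x j \<in> span (range x)" by (rule span_base) simp
    then show ?thesis unfolding X_def by (rule subsetD[OF closure_subset])
  qed
  have zX: "z k \<in> X" for k
  proof -
    have "z k \<in> span (range x)" unfolding z_def by (intro span_sum span_base) simp
    then show ?thesis unfolding X_def by (rule subsetD[OF closure_subset])
  qed
  have convX: "convergent (\<lambda>i. G (\<phi> i) v)" if "v \<in> X" for v
    using conv_closure_span[of "\<lambda>i. G (\<phi> i)" x v] Gd \<phi>(2) that unfolding X_def by blast
  obtain Gi where Gi: "Gi \<in> dual" "\<And>v. v \<in> X \<Longrightarrow> (\<lambda>i. G (\<phi> i) v) \<longlonglongrightarrow> Gi v"
    using HB_limit_ext[of "\<lambda>i. G (\<phi> i)" X] Gd Xsub convX by blast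
  define c where "c k = Gi (z (\<phi> k))" for k
  define m where "m i k = G (\<phi> i) (z (\<phi> k))" for i k
  have mc: "(\<lambda>i. m i k) \<longlonglongrightarrow> c k" for k
    unfolding m_def c_def using Gi(2)[OF zX] .
  have c_small: "\<exists>K0. \<forall>k\<ge>K0. \<bar>c k\<bar> \<le> d" if dpos: "d > 0" for d
  proof -
    obtain K where K: "\<forall>F. finite F \<longrightarrow> F \<subseteq> {K..} \<longrightarrow> (\<Sum>j\<in>F. \<bar>Gi (x j)\<bar>) \<le> d"
      using tail_small[OF summ[OF Gi(1)] dpos] by blast
    have "\<bar>c k\<bar> \<le> d" if "k \<ge> K" for k
    proof -
      note kK = that
      have "\<bar>c k\<bar> = \<bar>\<Sum>j\<in>Nk (\<phi> k). Gi (x j)\<bar>" using Gsum[OF Gi(1)] c_def by simp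
      also have "\<dots> \<le> (\<Sum>j\<in>Nk (\<phi> k). \<bar>Gi (x j)\<bar>)" by (rule sum_abs)
      also have "\<dots> \<le> d"
      proof -
        have "k \<le> \<phi> k" using seq_suble[OF \<phi>(1)] .
        also have "\<phi> k \<le> Kb (\<phi> k)" using seq_suble[OF Kb_mono] .
        finally have "Nk (\<phi> k) \<subseteq> {K..}" using Nk_ge[of "\<phi> k"] kK by auto
        then show ?thesis using K Nk_fin by blast
      qed
      finally show ?thesis .
    qed
    then show ?thesis by blast
  qed
  have rowtail: "\<exists>K. \<forall>F. finite F \<longrightarrow> F \<subseteq> {K..} \<longrightarrow> (\<Sum>j\<in>F. \<bar>G (\<phi> r) (x j)\<bar>) \<le> d" if "d > 0" for r d
    using tail_small[OF summ[OF Gd(1)] that] by blast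
  define \<delta> where "\<delta> = \<epsilon> / 20"
  have \<delta>pos: "\<delta> > 0" using \<epsilon> by (simp add: \<delta>_def)
  define P where "P p i \<longleftrightarrow> p < i \<and> \<bar>c i\<bar> \<le> \<delta> \<and> (\<forall>k\<le>p. \<bar>m i k - c k\<bar> \<le> \<delta> / (p+1)) \<and>
     (\<forall>F. finite F \<longrightarrow> F \<subseteq> {Kb (\<phi> i)..} \<longrightarrow> (\<Sum>j\<in>F. \<bar>G (\<phi> p) (x j)\<bar>) \<le> \<delta>)" for p i
  have exP: "\<exists>i. P p i" for p
  proof -
    obtain K0 where K0: "\<forall>k\<ge>K0. \<bar>c k\<bar> \<le> \<delta>" using c_small \<delta>pos by blast
    obtain K1 where K1: "\<forall>F. finite F \<longrightarrow> F \<subseteq> {K1..} \<longrightarrow> (\<Sum>j\<in>F. \<bar>G (\<phi> p) (x j)\<bar>) \<le> \<delta>"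
      using rowtail \<delta>pos by blast
    have ev1: "eventually (\<lambda>i. \<forall>k\<in>{..p}. \<bar>m i k - c k\<bar> \<le> \<delta>/(p+1)) sequentially"
    proof (rule eventually_ball_finite)
      show "finite {..p}" by simp
      show "\<forall>k\<in>{..p}. eventually (\<lambda>i. \<bar>m i k - c k\<bar> \<le> \<delta>/(p+1)) sequentially"
      proof
        fix k
        have pos: "\<delta>/(p+1) > 0" using \<delta>pos by simp
        have "\<forall>e>0. eventually (\<lambda>i. dist (m i k) (c k) < e) sequentially"
          using mc[of k] by (simp add: tendsto_iff)
        then have "eventually (\<lambda>i. dist (m i k) (c k) < \<delta>/(p+1)) sequentially"
          using pos by blast
        then show "eventually (\<lambda>i. \<bar>m i k - c k\<bar> \<le> \<delta>/(p+1)) sequentially"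
          by (rule eventually_mono) (simp add: dist_real_def)
      qed
    qed
    then obtain N where N: "\<And>i. i \<ge> N \<Longrightarrow> \<forall>k\<in>{..p}. \<bar>m i k - c k\<bar> \<le> \<delta>/(p+1)"
      by (auto simp: eventually_sequentially)
    define i where "i = max (Suc p) (max K0 (max K1 N))"
    have iN: "N \<le> i" and iK0: "K0 \<le> i" and iK1: "K1 \<le> i" and ip: "p < i" unfolding i_def by auto
    have "i \<le> \<phi> i" using seq_suble[OF \<phi>(1)] .
    also have "\<phi> i \<le> Kb (\<phi> i)" using seq_suble[OF Kb_mono] .
    finally have iK: "K1 \<le> Kb (\<phi> i)" using iK1 by linarith
    have "P p i" unfolding P_def
    proof (intro conjI allI impI)
      show "p < i" by (rule ip)
      show "\<bar>c i\<bar> \<le> \<delta>" using K0 iK0 by blast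
      fix k assume "k \<le> p" then show "\<bar>m i k - c k\<bar> \<le> \<delta>/(p+1)" using N[OF iN] by simp
    next
      fix F assume F: "finite F" "F \<subseteq> {Kb (\<phi> i)..}"
      then have "F \<subseteq> {K1..}" using iK by auto
      then show "(\<Sum>j\<in>F. \<bar>G (\<phi> p) (x j)\<bar>) \<le> \<delta>" using K1 F(1) by blast
    qed
    then show ?thesis by blast
  qed
  define nxt where "nxt p = (SOME i. P p i)" for p
  have Pnxt: "P p (nxt p)" for p using someI_ex[OF exP] unfolding nxt_def .
  define ii where "ii = rec_nat (nxt 0) (\<lambda>_ p. nxt p)"
  have ii0: "ii 0 = nxt 0" and iiS: "ii (Suc s) = nxt (ii s)" for s by (simp_all add: ii_def)
  have Pii: "P (ii s) (ii (Suc s))" for s using Pnxt iiS by simp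
  have ii_mono: "strict_mono ii" unfolding strict_mono_Suc_iff using Pii P_def by blast
  have c_ii: "\<bar>c (ii s)\<bar> \<le> \<delta>" for s
  proof (cases s)
    case 0 then show ?thesis using Pnxt[of 0] ii0 P_def by simp
  next
    case (Suc t) then show ?thesis using Pii[of t] P_def by simp
  qed
  define Ev where "Ev = {l::nat. even l}"
  define A where "A = (\<Union>l\<in>Ev. Nk (\<phi> (ii l)))"
  obtain vA where vA: "\<forall>g\<in>dual. (\<lambda>j. indicator A j * g (x j)) sums g vA" using sub by blast
  have vAX: "vA \<in> X"
  proof (rule ccontr)
    assume "vA \<notin> X"
    then obtain F where F: "F \<in> dual" "\<forall>y\<in>X. F y = 0" "F vA \<noteq> 0"
      using HB_subspace_dist[OF Xsub Xcl] by blast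
    have "(\<lambda>j. indicator A j * F (x j)) = (\<lambda>j. 0)" using F xX by auto
    then have "(\<lambda>j. 0) sums F vA" using vA F(1) by metis
    then have "F vA = 0" using sums_unique2[OF _ sums_zero] by blast
    then show False using F(3) by simp
  qed
  define val where "val s = G (\<phi> (ii s)) vA" for s
  have "convergent val"
    using convergent_subseq_convergent[OF convX[OF vAX] ii_mono] unfolding val_def by (simp add: o_def)
  then obtain V where V: "val \<longlonglongrightarrow> V" by (auto simp: convergent_def)
  have "(\<lambda>s. val s - val (Suc s)) \<longlonglongrightarrow> V - V"
    using tendsto_diff[OF V LIMSEQ_Suc[OF V]] .
  then have ev: "\<forall>e>0. eventually (\<lambda>s. dist (val s - val (Suc s)) 0 < e) sequentially"
    by (simp only: tendsto_iff diff_self)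
  have e4: "\<epsilon>/4 > 0" using \<epsilon> by simp
  obtain S0 where S0': "\<And>s. s \<ge> S0 \<Longrightarrow> dist (val s - val (Suc s)) 0 < \<epsilon>/4"
    using ev[rule_format, OF e4] unfolding eventually_sequentially by blast
  have S0: "\<bar>val s - val (Suc s)\<bar> < \<epsilon>/4" if "s \<ge> S0" for s
    using S0'[OF that] by (simp add: dist_real_def)
  have incKb': "incseq (\<lambda>l. Kb (\<phi> (ii l)))"
    using Kb_mono \<phi>(1) ii_mono by (simp add: incseq_def strict_mono_less_eq)
  have Nk'_sub: "Nk (\<phi> (ii l)) \<subseteq> {Kb (\<phi> (ii l))..<Kb (\<phi> (ii (Suc l)))}" for l
  proof -
    have "\<phi> (ii l) < \<phi> (ii (Suc l))" using \<phi>(1) ii_mono by (simp add: strict_mono_less)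
    then have "Kb (Suc (\<phi> (ii l))) \<le> Kb (\<phi> (ii (Suc l)))" using Kb_mono by (simp add: strict_mono_less_eq)
    then show ?thesis using Nk_sub[of "\<phi> (ii l)"] by auto
  qed
  have Ablk: "(\<Sum>j<Kb (\<phi> (ii M)). indicator A j * f j) = (\<Sum>l\<in>Ev \<inter> {..<M}. \<Sum>j\<in>Nk (\<phi> (ii l)). f j)" for f :: "nat \<Rightarrow> real" and M
  proof -
    let ?B = "Kb (\<phi> (ii M))"
    have "(\<Sum>j<?B. indicator A j * f j) = (\<Sum>j<?B. if j \<in> A then f j else 0)"
      by (intro sum.cong) (auto simp: indicator_def)
    also have "\<dots> = (\<Sum>j\<in>{..<?B} \<inter> A. f j)" by (simp add: sum.inter_restrict)
    also have "{..<?B} \<inter> A = (\<Union>l\<in>Ev. Nk (\<phi> (ii l))) \<inter> {..<?B}" unfolding A_def by blast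
    also have "(\<Sum>j\<in>\<dots>. f j) = (\<Sum>l\<in>Ev \<inter> {..<M}. \<Sum>j\<in>Nk (\<phi> (ii l)). f j)"
      by (rule blocks_sum[OF incKb' Nk'_sub])
    finally show ?thesis .
  qed
  have E12: "\<bar>val s - (\<Sum>l\<in>Ev \<inter> {..<Suc s}. m (ii s) (ii l))\<bar> \<le> \<delta>" for s
  proof -
    have t: "\<forall>F. finite F \<longrightarrow> F \<subseteq> {Kb (\<phi> (ii (Suc s)))..} \<longrightarrow> (\<Sum>j\<in>F. \<bar>G (\<phi> (ii s)) (x j)\<bar>) \<le> \<delta>"
      using Pii[of s] unfolding P_def by blast
    have "\<bar>val s - (\<Sum>j<Kb (\<phi> (ii (Suc s))). indicator A j * G (\<phi> (ii s)) (x j))\<bar> \<le> \<delta>"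
      unfolding val_def by (rule sums_tail_bound[OF vA[rule_format, OF Gd(1)] t])
    moreover have "(\<Sum>j<Kb (\<phi> (ii (Suc s))). indicator A j * G (\<phi> (ii s)) (x j)) = (\<Sum>l\<in>Ev \<inter> {..<Suc s}. m (ii s) (ii l))"
      unfolding Ablk m_def using Gsum[OF Gd(1)] by simp
    ultimately show ?thesis by simp
  qed
  have E3: "\<bar>(\<Sum>l\<in>Ev \<inter> {..<n}. m (ii (Suc q)) (ii l)) - (\<Sum>l\<in>Ev \<inter> {..<n}. c (ii l))\<bar> \<le> \<delta>" if nq: "n \<le> Suc q" for q n
  proof -
    have each: "\<bar>m (ii (Suc q)) (ii l) - c (ii l)\<bar> \<le> \<delta>/(ii q + 1)" if "l \<in> Ev \<inter> {..<n}" for l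
    proof -
      have "l \<le> q" using that nq by auto
      then have "ii l \<le> ii q" using ii_mono by (simp add: strict_mono_less_eq)
      then show ?thesis using Pii[of q] unfolding P_def by auto
    qed
    have "\<bar>(\<Sum>l\<in>Ev \<inter> {..<n}. m (ii (Suc q)) (ii l)) - (\<Sum>l\<in>Ev \<inter> {..<n}. c (ii l))\<bar>
        = \<bar>\<Sum>l\<in>Ev \<inter> {..<n}. (m (ii (Suc q)) (ii l) - c (ii l))\<bar>" by (simp add: sum_subtractf)
    also have "\<dots> \<le> (\<Sum>l\<in>Ev \<inter> {..<n}. \<bar>m (ii (Suc q)) (ii l) - c (ii l)\<bar>)" by (rule sum_abs)
    also have "\<dots> \<le> (\<Sum>l\<in>Ev \<inter> {..<n}. \<delta>/(ii q + 1))" by (rule sum_mono) (use each in auto)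
    also have "\<dots> = card (Ev \<inter> {..<n}) * (\<delta>/(ii q + 1))" by simp
    also have "\<dots> \<le> n * (\<delta>/(ii q + 1))"
    proof -
      have "card (Ev \<inter> {..<n}) \<le> card {..<n}" by (intro card_mono) auto
      then show ?thesis using \<delta>pos by (intro mult_right_mono) auto
    qed
    also have "\<dots> \<le> \<delta>"
    proof -
      have "q \<le> ii q" using seq_suble[OF ii_mono] .
      then have "real n \<le> real (ii q) + 1" using nq by linarith
      then have "real n / (real (ii q) + 1) \<le> 1" by (simp add: divide_le_eq)
      then have "\<delta> * (real n / (real (ii q) + 1)) \<le> \<delta> * 1" using \<delta>pos by (intro mult_left_mono) auto
      then show ?thesis by (simp add: field_simps)
    qed
    finally show ?thesis .
  qed
  define s where "s = Suc (Suc (2 * S0))"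
  have s_even: "even s" and s_ge: "s \<ge> S0" unfolding s_def by auto
  have setS: "Ev \<inter> {..<Suc s} = insert s (Ev \<inter> {..<s})" using s_even unfolding Ev_def by auto
  have setS2: "Ev \<inter> {..<Suc (Suc s)} = Ev \<inter> {..<Suc s}" using s_even unfolding Ev_def
    by (auto simp: less_Suc_eq)
  have fin: "finite (Ev \<inter> {..<s})" by simp
  have sn: "s \<notin> Ev \<inter> {..<s}" by simp
  have a: "\<bar>val s - (\<Sum>l\<in>Ev \<inter> {..<Suc s}. m (ii s) (ii l))\<bar> \<le> \<delta>" by (rule E12)
  have b: "(\<Sum>l\<in>Ev \<inter> {..<Suc s}. m (ii s) (ii l)) = m (ii s) (ii s) + (\<Sum>l\<in>Ev \<inter> {..<s}. m (ii s) (ii l))"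
    unfolding setS using fin sn by (simp add: sum.insert)
  have c3: "\<bar>(\<Sum>l\<in>Ev \<inter> {..<s}. m (ii s) (ii l)) - (\<Sum>l\<in>Ev \<inter> {..<s}. c (ii l))\<bar> \<le> \<delta>"
    using E3[of s "Suc (2 * S0)"] unfolding s_def by simp
  have d: "\<bar>val (Suc s) - (\<Sum>l\<in>Ev \<inter> {..<Suc s}. m (ii (Suc s)) (ii l))\<bar> \<le> \<delta>"
    using E12[of "Suc s"] unfolding setS2 .
  have f: "\<bar>(\<Sum>l\<in>Ev \<inter> {..<Suc s}. m (ii (Suc s)) (ii l)) - (\<Sum>l\<in>Ev \<inter> {..<Suc s}. c (ii l))\<bar> \<le> \<delta>"
    using E3[of "Suc s" s] by simp
  have g: "(\<Sum>l\<in>Ev \<inter> {..<Suc s}. c (ii l)) = c (ii s) + (\<Sum>l\<in>Ev \<inter> {..<s}. c (ii l))"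
    unfolding setS using fin sn by (simp add: sum.insert)
  have h: "\<bar>m (ii s) (ii s)\<bar> > \<epsilon>/2" using diagbig unfolding m_def by simp
  have i: "\<bar>c (ii s)\<bar> \<le> \<delta>" by (rule c_ii)
  have j: "\<bar>val s - val (Suc s)\<bar> < \<epsilon>/4" using S0 s_ge by blast
  show False using a b c3 d f g h i j \<epsilon> unfolding \<delta>_def by linarith
qed



definition PSL :: "((nat \<Rightarrow> real) \<Rightarrow> 'e::real_normed_vector) \<Rightarrow> (nat \<Rightarrow> real) \<Rightarrow> nat set \<Rightarrow> nat \<Rightarrow> 'e" where
  "PSL T y A K = (\<Sum>n<K. (indicator A n * y n) *\<^sub>R T (unitvec n))"

lemma var_meas_integrable:
  "integrable (var_meas T g) y \<longleftrightarrow> summable (\<lambda>n. \<bar>g (T (unitvec n))\<bar> * \<bar>y n\<bar>)"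
  unfolding var_meas_def
  by (subst integrable_density) (auto simp: integrable_count_space_nat_iff abs_mult)

lemma var_meas_integral:
  assumes "summable (\<lambda>n. \<bar>g (T (unitvec n))\<bar> * \<bar>y n\<bar>)"
  shows "integral\<^sup>L (var_meas T g) y = (\<Sum>n. \<bar>g (T (unitvec n))\<bar> * y n)"
proof -
  have "integrable (count_space UNIV) (\<lambda>n. \<bar>g (T (unitvec n))\<bar> *\<^sub>R y n)"
    using assms by (simp add: integrable_count_space_nat_iff abs_mult)
  then show ?thesis unfolding var_meas_def
    by (subst integral_density) (auto simp: integral_count_space_nat)
qed

lemma scal_int_sums:
  assumes "summable (\<lambda>n. \<bar>g (T (unitvec n))\<bar> * \<bar>y n\<bar>)"
  shows "(\<lambda>n. indicator A n * y n * g (T (unitvec n))) sums scal_int T g A y"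
proof -
  have "summable (\<lambda>n. norm (indicator A n * y n * g (T (unitvec n))))"
    by (rule summable_comparison_test'[OF assms, of 0]) (auto simp: indicator_def abs_mult)
  then have "integrable (count_space UNIV) (\<lambda>n. indicator A n * y n * g (T (unitvec n)))"
    by (simp add: integrable_count_space_nat_iff)
  from sums_integral_count_space_nat[OF this] show ?thesis unfolding scal_int_def .
qed

lemma l1m_iff:
  "y \<in> l1m T \<longleftrightarrow> (\<forall>g\<in>dual. summable (\<lambda>n. \<bar>g (T (unitvec n))\<bar> * \<bar>y n\<bar>)) \<and>
     (\<forall>A. \<exists>v. \<forall>g\<in>dual. (\<lambda>n. indicator A n * y n * g (T (unitvec n))) sums g v)"
proof
  assume y: "y \<in> l1m T"
  then have s: "\<forall>g\<in>dual. summable (\<lambda>n. \<bar>g (T (unitvec n))\<bar> * \<bar>y n\<bar>)"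
    unfolding l1m_def by (simp add: var_meas_integrable)
  moreover have "\<exists>v. \<forall>g\<in>dual. (\<lambda>n. indicator A n * y n * g (T (unitvec n))) sums g v" for A
  proof -
    obtain v where v: "\<forall>f\<in>dual. f v = scal_int T f A y" using y unfolding l1m_def by blast
    have "(\<lambda>n. indicator A n * y n * g (T (unitvec n))) sums g v" if g: "g \<in> dual" for g
      using scal_int_sums[of g T y A] s v g by simp
    then show ?thesis by blast
  qed
  ultimately show "(\<forall>g\<in>dual. summable (\<lambda>n. \<bar>g (T (unitvec n))\<bar> * \<bar>y n\<bar>)) \<and>
     (\<forall>A. \<exists>v. \<forall>g\<in>dual. (\<lambda>n. indicator A n * y n * g (T (unitvec n))) sums g v)" by blast
next
  assume h: "(\<forall>g\<in>dual. summable (\<lambda>n. \<bar>g (T (unitvec n))\<bar> * \<bar>y n\<bar>)) \<and>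
     (\<forall>A. \<exists>v. \<forall>g\<in>dual. (\<lambda>n. indicator A n * y n * g (T (unitvec n))) sums g v)"
  have "\<exists>v. \<forall>f\<in>dual. f v = scal_int T f A y" for A
  proof -
    obtain v where v: "\<forall>g\<in>dual. (\<lambda>n. indicator A n * y n * g (T (unitvec n))) sums g v" using h by blast
    have "f v = scal_int T f A y" if "f \<in> dual" for f
      using sums_unique2[OF v[rule_format, OF that] scal_int_sums[of f T y A]] h that by blast
    then show ?thesis by blast
  qed
  then show "y \<in> l1m T" using h unfolding l1m_def by (simp add: var_meas_integrable)
qed

lemma weak_of_ps:
  fixes T :: "(nat \<Rightarrow> real) \<Rightarrow> 'e::real_normed_vector"
  assumes "PSL T y A \<longlonglongrightarrow> v" "g \<in> dual"
  shows "(\<lambda>n. indicator A n * y n * g (T (unitvec n))) sums g v"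
proof -
  have bl: "bounded_linear g" using assms(2) by (simp add: dual_def)
  have "(\<lambda>K. g (PSL T y A K)) \<longlonglongrightarrow> g v" using bounded_linear.tendsto[OF bl assms(1)] .
  moreover have "g (PSL T y A K) = (\<Sum>n<K. indicator A n * y n * g (T (unitvec n)))" for K
    unfolding PSL_def using bounded_linear.linear[OF bl]
    by (simp add: linear_sum linear_scale)
  ultimately show ?thesis unfolding sums_def by simp
qed

lemma MEM:
  fixes T :: "(nat \<Rightarrow> real) \<Rightarrow> 'e::real_normed_vector"
  assumes "\<And>A. \<exists>v. PSL T y A \<longlonglongrightarrow> v"
  shows "y \<in> l1m T"
  unfolding l1m_iff
proof (intro conjI ballI allI)
  fix A show "\<exists>v. \<forall>g\<in>dual. (\<lambda>n. indicator A n * y n * g (T (unitvec n))) sums g v"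
    using assms[of A] weak_of_ps by blast
next
  fix g :: "'e \<Rightarrow> real" assume g: "g \<in> dual"
  have "summable (\<lambda>n. indicator A n * (y n * g (T (unitvec n))))" for A
  proof -
    obtain v where "PSL T y A \<longlonglongrightarrow> v" using assms by blast
    from weak_of_ps[OF this g] show ?thesis by (simp add: sums_summable mult.assoc)
  qed
  then have "summable (\<lambda>n. \<bar>y n * g (T (unitvec n))\<bar>)" by (rule ABS_summable)
  then show "summable (\<lambda>n. \<bar>g (T (unitvec n))\<bar> * \<bar>y n\<bar>)" by (simp add: abs_mult mult.commute)
qed

lemma vec_int_unique:
  fixes T :: "(nat \<Rightarrow> real) \<Rightarrow> 'e::real_normed_vector"
  assumes y: "y \<in> l1m T" and v: "\<forall>g\<in>dual. (\<lambda>n. indicator A n * y n * g (T (unitvec n))) sums g v"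
  shows "vec_int T A y = v"
proof -
  have s: "\<forall>g\<in>dual. summable (\<lambda>n. \<bar>g (T (unitvec n))\<bar> * \<bar>y n\<bar>)" using y l1m_iff by blast
  have P: "\<forall>f\<in>dual. f v = scal_int T f A y"
  proof
    fix f :: "'e \<Rightarrow> real" assume f: "f \<in> dual"
    show "f v = scal_int T f A y"
      using sums_unique2[OF v[rule_format, OF f] scal_int_sums[of f T y A]] s f by blast
  qed
  then have "\<forall>f\<in>dual. f (vec_int T A y) = scal_int T f A y"
    unfolding vec_int_def by (rule someI)
  with P have "\<forall>f\<in>(dual::('e \<Rightarrow> real) set). f (vec_int T A y) = f v" by auto
  then show ?thesis by (rule dual_separates)
qed

lemma vec_int_sums:
  fixes T :: "(nat \<Rightarrow> real) \<Rightarrow> 'e::real_normed_vector"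
  assumes y: "y \<in> l1m T" and g: "g \<in> dual"
  shows "(\<lambda>n. indicator A n * y n * g (T (unitvec n))) sums g (vec_int T A y)"
proof -
  obtain v where v: "\<forall>g\<in>dual. (\<lambda>n. indicator A n * y n * g (T (unitvec n))) sums g v"
    using y l1m_iff by blast
  then show ?thesis using vec_int_unique[OF y v] g by simp
qed

lemma vec_int_ps:
  fixes T :: "(nat \<Rightarrow> real) \<Rightarrow> 'e::real_normed_vector"
  assumes "PSL T y A \<longlonglongrightarrow> v" "y \<in> l1m T"
  shows "vec_int T A y = v"
  using vec_int_unique[OF assms(2)] weak_of_ps[OF assms(1)] by blast

lemma UT:
  fixes T :: "(nat \<Rightarrow> real) \<Rightarrow> 'e::banach"
  assumes y: "y \<in> l1m T" and eta: "\<eta> > 0"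
  shows "\<exists>K. \<forall>g\<in>dual. onorm g \<le> 1 \<longrightarrow> (\<forall>F. finite F \<longrightarrow> F \<subseteq> {K..} \<longrightarrow>
            (\<Sum>j\<in>F. \<bar>y j\<bar> * \<bar>g (T (unitvec j))\<bar>) \<le> \<eta>)"
proof -
  have lin: "g (y j *\<^sub>R T (unitvec j)) = y j * g (T (unitvec j))" if "g \<in> dual" for g j
    using dual_linear[OF that] by (simp add: linear_scale)
  have "\<exists>v. \<forall>g\<in>dual. (\<lambda>j. indicator A j * g (y j *\<^sub>R T (unitvec j))) sums g v" for A
  proof -
    obtain v where v: "\<forall>g\<in>dual. (\<lambda>n. indicator A n * y n * g (T (unitvec n))) sums g v"
      using y l1m_iff by blast
    then show ?thesis using lin by (intro exI[of _ v]) (simp add: mult.assoc)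
  qed
  from OP[of "\<lambda>j. y j *\<^sub>R T (unitvec j)", OF this] eta obtain K where
    K: "\<forall>g\<in>dual. onorm g \<le> 1 \<longrightarrow> (\<forall>F. finite F \<longrightarrow> F \<subseteq> {K..} \<longrightarrow> (\<Sum>j\<in>F. \<bar>g (y j *\<^sub>R T (unitvec j))\<bar>) \<le> \<eta>)"
    by blast
  have "(\<Sum>j\<in>F. \<bar>y j\<bar> * \<bar>g (T (unitvec j))\<bar>) \<le> \<eta>"
    if g: "g \<in> dual" "onorm g \<le> 1" and F: "finite F" "F \<subseteq> {K..}" for g F
  proof -
    have "(\<Sum>j\<in>F. \<bar>y j\<bar> * \<bar>g (T (unitvec j))\<bar>) = (\<Sum>j\<in>F. \<bar>g (y j *\<^sub>R T (unitvec j))\<bar>)"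
      using lin[OF g(1)] by (simp add: abs_mult)
    also have "\<dots> \<le> \<eta>" using K g F by blast
    finally show ?thesis .
  qed
  then show ?thesis by blast
qed

lemma norming:
  fixes w :: "'e::real_normed_vector"
  shows "\<exists>g\<in>dual. onorm g \<le> 1 \<and> g w = norm w"
  using HB_norming[of w] by (auto simp: dual_def)

lemma dual_abs_le1: "g \<in> dual \<Longrightarrow> onorm g \<le> 1 \<Longrightarrow> \<bar>g x\<bar> \<le> norm x"
proof -
  assume "g \<in> dual" "onorm g \<le> 1"
  then have "\<bar>g x\<bar> \<le> onorm g * norm x" using dual_abs_le by blast
  also have "\<dots> \<le> 1 * norm x" using \<open>onorm g \<le> 1\<close> by (intro mult_right_mono) auto
  finally show ?thesis by simp
qed

lemma sum_lessThan_diff: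
  fixes f :: "nat \<Rightarrow> 'a::ab_group_add"
  assumes "n \<le> m" shows "(\<Sum>j<m. f j) - (\<Sum>j<n. f j) = (\<Sum>j\<in>{n..<m}. f j)"
proof -
  have "(\<Sum>j\<in>{0..<n}. f j) + (\<Sum>j\<in>{n..<m}. f j) = (\<Sum>j\<in>{0..<m}. f j)"
    by (rule sum.atLeastLessThan_concat) (use assms in auto)
  then show ?thesis by (simp add: atLeast0LessThan algebra_simps)
qed

lemma CONV:
  fixes T :: "(nat \<Rightarrow> real) \<Rightarrow> 'e::banach"
  assumes y: "y \<in> l1m T" and b: "\<And>n. \<bar>b n\<bar> \<le> B"
  shows "convergent (\<lambda>K. \<Sum>n<K. (b n * y n) *\<^sub>R T (unitvec n))"
proof -
  define S where "S K = (\<Sum>n<K. (b n * y n) *\<^sub>R T (unitvec n))" for K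
  have "Cauchy S"
  proof (rule CauchyI)
    fix e :: real assume e: "e > 0"
    define \<eta> where "\<eta> = e / (2 * (\<bar>B\<bar> + 1))"
    have \<eta>: "\<eta> > 0" using e by (simp add: \<eta>_def)
    obtain K where K: "\<forall>g\<in>dual. onorm g \<le> 1 \<longrightarrow> (\<forall>F. finite F \<longrightarrow> F \<subseteq> {K..} \<longrightarrow>
            (\<Sum>j\<in>F. \<bar>y j\<bar> * \<bar>g (T (unitvec j))\<bar>) \<le> \<eta>)"
      using UT[OF y \<eta>] by blast
    have diff: "norm (S m - S n) \<le> \<bar>B\<bar> * \<eta>" if "n \<le> m" "K \<le> n" for m n
    proof -
      have eq: "S m - S n = (\<Sum>j\<in>{n..<m}. (b j * y j) *\<^sub>R T (unitvec j))"
        unfolding S_def by (rule sum_lessThan_diff[OF that(1)])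
      obtain g where g: "g \<in> dual" "onorm g \<le> 1" "g (S m - S n) = norm (S m - S n)"
        using norming by blast
      have "norm (S m - S n) = (\<Sum>j\<in>{n..<m}. b j * y j * g (T (unitvec j)))"
        using g(3) dual_linear[OF g(1)] unfolding eq by (simp add: linear_sum linear_scale)
      also have "\<dots> \<le> (\<Sum>j\<in>{n..<m}. \<bar>B\<bar> * (\<bar>y j\<bar> * \<bar>g (T (unitvec j))\<bar>))"
      proof (rule sum_mono)
        fix j
        have "b j * y j * g (T (unitvec j)) \<le> \<bar>b j\<bar> * (\<bar>y j\<bar> * \<bar>g (T (unitvec j))\<bar>)"
          by (simp add: abs_mult[symmetric])
        also have "\<dots> \<le> \<bar>B\<bar> * (\<bar>y j\<bar> * \<bar>g (T (unitvec j))\<bar>)"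
          using b[of j] by (intro mult_right_mono) auto
        finally show "b j * y j * g (T (unitvec j)) \<le> \<bar>B\<bar> * (\<bar>y j\<bar> * \<bar>g (T (unitvec j))\<bar>)" .
      qed
      also have "\<dots> = \<bar>B\<bar> * (\<Sum>j\<in>{n..<m}. \<bar>y j\<bar> * \<bar>g (T (unitvec j))\<bar>)" by (simp add: sum_distrib_left)
      also have "\<dots> \<le> \<bar>B\<bar> * \<eta>"
      proof -
        have "{n..<m} \<subseteq> {K..}" using that by auto
        then have "(\<Sum>j\<in>{n..<m}. \<bar>y j\<bar> * \<bar>g (T (unitvec j))\<bar>) \<le> \<eta>" using K g by blast
        then show ?thesis by (intro mult_left_mono) auto
      qed
      finally show ?thesis .
    qed
    have lt: "\<bar>B\<bar> * \<eta> < e"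
    proof -
      have "\<bar>B\<bar> * \<eta> = e * (\<bar>B\<bar> / (2 * (\<bar>B\<bar> + 1)))" by (simp add: \<eta>_def)
      also have "\<bar>B\<bar> / (2 * (\<bar>B\<bar> + 1)) < 1" by (simp add: divide_less_eq)
      then have "e * (\<bar>B\<bar> / (2 * (\<bar>B\<bar> + 1))) < e * 1" using e by (intro mult_strict_left_mono) auto
      finally show ?thesis by simp
    qed
    have "norm (S m - S n) < e" if "m \<ge> K" "n \<ge> K" for m n
    proof (cases "n \<le> m")
      case True then show ?thesis using diff[of n m] that lt by simp
    next
      case False then show ?thesis using diff[of m n] that lt by (simp add: norm_minus_commute)
    qed
    then show "\<exists>M. \<forall>m\<ge>M. \<forall>n\<ge>M. norm (S m - S n) < e" by blast
  qed
  then show ?thesis unfolding S_def by (simp add: Cauchy_convergent_iff)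
qed

lemma l1m_ps:
  fixes T :: "(nat \<Rightarrow> real) \<Rightarrow> 'e::banach"
  assumes y: "y \<in> l1m T"
  shows "PSL T y A \<longlonglongrightarrow> vec_int T A y"
proof -
  have "convergent (PSL T y A)"
    using CONV[OF y, of "indicator A" 1] unfolding PSL_def by (simp add: indicator_def)
  then obtain v where v: "PSL T y A \<longlonglongrightarrow> v" by (auto simp: convergent_def)
  then show ?thesis using vec_int_ps[OF v y] by simp
qed

lemma l1m_bmult:
  fixes T :: "(nat \<Rightarrow> real) \<Rightarrow> 'e::banach"
  assumes y: "y \<in> l1m T" and b: "\<And>n. \<bar>b n\<bar> \<le> B"
  shows "(\<lambda>n. b n * y n) \<in> l1m T"
proof (rule MEM)
  fix A
  have "\<bar>indicator A n * b n\<bar> \<le> \<bar>B\<bar>" for n using b[of n] by (auto simp: indicator_def)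
  from CONV[OF y this] have "convergent (PSL T (\<lambda>n. b n * y n) A)"
    unfolding PSL_def by (simp add: mult.assoc)
  then show "\<exists>v. PSL T (\<lambda>n. b n * y n) A \<longlonglongrightarrow> v" by (auto simp: convergent_def)
qed

lemma l1m_add:
  fixes T :: "(nat \<Rightarrow> real) \<Rightarrow> 'e::banach"
  assumes y: "y \<in> l1m T" and w: "w \<in> l1m T"
  shows "(\<lambda>n. y n + w n) \<in> l1m T" "vec_int T A (\<lambda>n. y n + w n) = vec_int T A y + vec_int T A w"
proof -
  have eq: "PSL T (\<lambda>n. y n + w n) B = (\<lambda>K. PSL T y B K + PSL T w B K)" for B
    unfolding PSL_def by (simp add: fun_eq_iff algebra_simps scaleR_add_left sum.distrib)
  have lim: "PSL T (\<lambda>n. y n + w n) B \<longlonglongrightarrow> vec_int T B y + vec_int T B w" for B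
    unfolding eq using tendsto_add[OF l1m_ps[OF y] l1m_ps[OF w]] .
  show mem: "(\<lambda>n. y n + w n) \<in> l1m T" using lim by (intro MEM) blast
  show "vec_int T A (\<lambda>n. y n + w n) = vec_int T A y + vec_int T A w"
    using vec_int_ps[OF lim mem] .
qed

lemma l1m_scale:
  fixes T :: "(nat \<Rightarrow> real) \<Rightarrow> 'e::banach"
  assumes y: "y \<in> l1m T"
  shows "(\<lambda>n. c * y n) \<in> l1m T" "vec_int T A (\<lambda>n. c * y n) = c *\<^sub>R vec_int T A y"
proof -
  have eq: "PSL T (\<lambda>n. c * y n) B = (\<lambda>K. c *\<^sub>R PSL T y B K)" for B
    unfolding PSL_def by (simp add: fun_eq_iff scaleR_sum_right algebra_simps)
  have lim: "PSL T (\<lambda>n. c * y n) B \<longlonglongrightarrow> c *\<^sub>R vec_int T B y" for B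
    unfolding eq using tendsto_scaleR[OF tendsto_const l1m_ps[OF y]] .
  show mem: "(\<lambda>n. c * y n) \<in> l1m T" using lim by (intro MEM) blast
  show "vec_int T A (\<lambda>n. c * y n) = c *\<^sub>R vec_int T A y"
    using vec_int_ps[OF lim mem] .
qed

lemma l1m_summ:
  "y \<in> l1m T \<Longrightarrow> g \<in> dual \<Longrightarrow> summable (\<lambda>n. \<bar>g (T (unitvec n))\<bar> * \<bar>y n\<bar>)"
  using l1m_iff by blast

lemma l1m_bdd:
  fixes T :: "(nat \<Rightarrow> real) \<Rightarrow> 'e::banach"
  assumes y: "y \<in> l1m T"
  shows "\<exists>M. \<forall>g\<in>dual. onorm g \<le> 1 \<longrightarrow> (\<Sum>n. \<bar>g (T (unitvec n))\<bar> * \<bar>y n\<bar>) \<le> M"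
proof -
  obtain K where K: "\<forall>g\<in>dual. onorm g \<le> 1 \<longrightarrow> (\<forall>F. finite F \<longrightarrow> F \<subseteq> {K..} \<longrightarrow>
            (\<Sum>j\<in>F. \<bar>y j\<bar> * \<bar>g (T (unitvec j))\<bar>) \<le> 1)"
    using UT[OF y, of 1] by auto
  define M where "M = (\<Sum>n<K. norm (T (unitvec n)) * \<bar>y n\<bar>) + 1"
  have "(\<Sum>n. \<bar>g (T (unitvec n))\<bar> * \<bar>y n\<bar>) \<le> M" if g: "g \<in> dual" "onorm g \<le> 1" for g
  proof (rule suminf_le_const)
    show "summable (\<lambda>n. \<bar>g (T (unitvec n))\<bar> * \<bar>y n\<bar>)" using l1m_summ[OF y g(1)] .
    fix N
    let ?f = "\<lambda>n. \<bar>g (T (unitvec n))\<bar> * \<bar>y n\<bar>"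
    have "sum ?f {..<N} \<le> sum ?f {..<max N K}" by (intro sum_mono2) auto
    also have "\<dots> = sum ?f {..<K} + sum ?f {K..<max N K}"
      using sum_lessThan_diff[of K "max N K" ?f] by simp
    also have "sum ?f {..<K} \<le> (\<Sum>n<K. norm (T (unitvec n)) * \<bar>y n\<bar>)"
      by (intro sum_mono mult_right_mono dual_abs_le1[OF g]) auto
    also have "sum ?f {K..<max N K} \<le> 1"
    proof -
      have "sum ?f {K..<max N K} = (\<Sum>j\<in>{K..<max N K}. \<bar>y j\<bar> * \<bar>g (T (unitvec j))\<bar>)"
        by (simp add: mult.commute)
      also have "\<dots> \<le> 1"
      proof -
        have "{K..<max N K} \<subseteq> {K..}" by auto
        then show ?thesis using K g by blast
      qed
      finally show ?thesis .
    qed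
    finally show "sum ?f {..<N} \<le> M" unfolding M_def by simp
  qed
  then show ?thesis by blast
qed

lemma norm_l1m_ge:
  fixes T :: "(nat \<Rightarrow> real) \<Rightarrow> 'e::banach"
  assumes y: "y \<in> l1m T" and g: "g \<in> dual" "onorm g \<le> 1"
  shows "(\<Sum>n. \<bar>g (T (unitvec n))\<bar> * \<bar>y n\<bar>) \<le> norm_l1m T y"
proof -
  have int: "integral\<^sup>L (var_meas T f) (\<lambda>n. \<bar>y n\<bar>) = (\<Sum>n. \<bar>f (T (unitvec n))\<bar> * \<bar>y n\<bar>)" if "f \<in> dual" for f
    using var_meas_integral[of f T "\<lambda>n. \<bar>y n\<bar>"] l1m_summ[OF y that] by simp
  obtain M where M: "\<forall>g\<in>dual. onorm g \<le> 1 \<longrightarrow> (\<Sum>n. \<bar>g (T (unitvec n))\<bar> * \<bar>y n\<bar>) \<le> M"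
    using l1m_bdd[OF y] by blast
  have bdd: "bdd_above ((\<lambda>f. integral\<^sup>L (var_meas T f) (\<lambda>n. \<bar>y n\<bar>)) ` {f\<in>dual. onorm f \<le> 1})"
    using M int by (auto intro!: bdd_aboveI[of _ M])
  have "integral\<^sup>L (var_meas T g) (\<lambda>n. \<bar>y n\<bar>) \<le> norm_l1m T y"
    unfolding norm_l1m_def by (rule cSUP_upper[OF _ bdd]) (use g in auto)
  then show ?thesis using int[OF g(1)] by simp
qed

lemma zero_dual: "(\<lambda>_. 0) \<in> dual" "onorm (\<lambda>_::'e::real_normed_vector. 0::real) \<le> 1"
  by (auto simp: dual_def onorm_zero)

lemma norm_l1m_nonneg:
  fixes T :: "(nat \<Rightarrow> real) \<Rightarrow> 'e::banach"
  assumes y: "y \<in> l1m T"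
  shows "0 \<le> norm_l1m T y"
  using norm_l1m_ge[OF y zero_dual] by simp

lemma norm_l1m_abs: "norm_l1m T (\<lambda>n. \<bar>y n\<bar>) = norm_l1m T y"
  unfolding norm_l1m_def by simp

lemma norm_finite_le:
  fixes T :: "(nat \<Rightarrow> real) \<Rightarrow> 'e::banach"
  assumes y: "y \<in> l1m T" and F: "finite F"
  shows "norm (\<Sum>j\<in>F. y j *\<^sub>R T (unitvec j)) \<le> norm_l1m T y"
proof -
  obtain g where g: "g \<in> dual" "onorm g \<le> 1" "g (\<Sum>j\<in>F. y j *\<^sub>R T (unitvec j)) = norm (\<Sum>j\<in>F. y j *\<^sub>R T (unitvec j))"
    using norming by blast
  have "norm (\<Sum>j\<in>F. y j *\<^sub>R T (unitvec j)) = (\<Sum>j\<in>F. y j * g (T (unitvec j)))"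
    using g(3) dual_linear[OF g(1)] by (simp add: linear_sum linear_scale)
  also have "\<dots> \<le> (\<Sum>j\<in>F. \<bar>g (T (unitvec j))\<bar> * \<bar>y j\<bar>)"
    by (intro sum_mono) (simp add: abs_mult[symmetric] mult.commute)
  also have "\<dots> \<le> (\<Sum>n. \<bar>g (T (unitvec n))\<bar> * \<bar>y n\<bar>)"
    by (rule sum_le_suminf[OF l1m_summ[OF y g(1)] F]) auto
  also have "\<dots> \<le> norm_l1m T y" by (rule norm_l1m_ge[OF y g(1,2)])
  finally show ?thesis .
qed

lemma norm_vec_int_le:
  fixes T :: "(nat \<Rightarrow> real) \<Rightarrow> 'e::banach"
  assumes y: "y \<in> l1m T"
  shows "norm (vec_int T A y) \<le> norm_l1m T y"
proof -
  obtain g where g: "g \<in> dual" "onorm g \<le> 1" "g (vec_int T A y) = norm (vec_int T A y)"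
    using norming by blast
  let ?f = "\<lambda>n. indicator A n * y n * g (T (unitvec n))"
  have s: "?f sums g (vec_int T A y)" by (rule vec_int_sums[OF y g(1)])
  have sa: "summable (\<lambda>n. \<bar>?f n\<bar>)"
    by (rule summable_comparison_test'[OF l1m_summ[OF y g(1)], of 0]) (auto simp: indicator_def abs_mult)
  have "norm (vec_int T A y) = suminf ?f" using g(3) sums_unique[OF s] by simp
  also have "\<dots> \<le> (\<Sum>n. \<bar>?f n\<bar>)" using summable_rabs[OF sa] by simp
  also have "\<dots> \<le> (\<Sum>n. \<bar>g (T (unitvec n))\<bar> * \<bar>y n\<bar>)"
    by (rule suminf_le[OF _ sa l1m_summ[OF y g(1)]]) (auto simp: indicator_def abs_mult)
  also have "\<dots> \<le> norm_l1m T y" by (rule norm_l1m_ge[OF y g(1,2)])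
  finally show ?thesis .
qed

lemma norm_finite_tail:
  fixes T :: "(nat \<Rightarrow> real) \<Rightarrow> 'e::banach"
  assumes y: "y \<in> l1m T" and eta: "\<eta> > 0"
  shows "\<exists>K. \<forall>F. finite F \<longrightarrow> F \<subseteq> {K..} \<longrightarrow> norm (\<Sum>j\<in>F. y j *\<^sub>R T (unitvec j)) \<le> \<eta>"
proof -
  obtain K where K: "\<forall>g\<in>dual. onorm g \<le> 1 \<longrightarrow> (\<forall>F. finite F \<longrightarrow> F \<subseteq> {K..} \<longrightarrow>
            (\<Sum>j\<in>F. \<bar>y j\<bar> * \<bar>g (T (unitvec j))\<bar>) \<le> \<eta>)"
    using UT[OF y eta] by blast
  have "norm (\<Sum>j\<in>F. y j *\<^sub>R T (unitvec j)) \<le> \<eta>" if F: "finite F" "F \<subseteq> {K..}" for F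
  proof -
    obtain g where g: "g \<in> dual" "onorm g \<le> 1" "g (\<Sum>j\<in>F. y j *\<^sub>R T (unitvec j)) = norm (\<Sum>j\<in>F. y j *\<^sub>R T (unitvec j))"
      using norming by blast
    have "norm (\<Sum>j\<in>F. y j *\<^sub>R T (unitvec j)) = (\<Sum>j\<in>F. y j * g (T (unitvec j)))"
      using g(3) dual_linear[OF g(1)] by (simp add: linear_sum linear_scale)
    also have "\<dots> \<le> (\<Sum>j\<in>F. \<bar>y j\<bar> * \<bar>g (T (unitvec j))\<bar>)"
      by (intro sum_mono) (simp add: abs_mult[symmetric])
    also have "\<dots> \<le> \<eta>" using K g F by blast
    finally show ?thesis .
  qed
  then show ?thesis by blast
qed

lemma split_sum:
  fixes t :: "nat \<Rightarrow> 'e::real_vector"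
  assumes S: "finite S"
  shows "(\<Sum>j\<in>S. (indicator A j * y j) *\<^sub>R t j) =
     (\<Sum>j\<in>{j\<in>S. j\<in>A \<and> 0 \<le> y j}. \<bar>y j\<bar> *\<^sub>R t j) - (\<Sum>j\<in>{j\<in>S. j\<in>A \<and> y j < 0}. \<bar>y j\<bar> *\<^sub>R t j)"
proof -
  let ?P = "{j\<in>S. j\<in>A \<and> 0 \<le> y j}" and ?Q = "{j\<in>S. j\<in>A \<and> y j < 0}"
  let ?f = "\<lambda>j. (indicator A j * y j) *\<^sub>R t j"
  have "(\<Sum>j\<in>S. ?f j) = (\<Sum>j\<in>?P \<union> ?Q. ?f j)"
    by (rule sum.mono_neutral_right[OF S]) (auto simp: indicator_def)
  also have "\<dots> = (\<Sum>j\<in>?P. ?f j) + (\<Sum>j\<in>?Q. ?f j)"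
    by (rule sum.union_disjoint) (use S in auto)
  also have "(\<Sum>j\<in>?P. ?f j) = (\<Sum>j\<in>?P. \<bar>y j\<bar> *\<^sub>R t j)" by (intro sum.cong) auto
  also have "(\<Sum>j\<in>?Q. ?f j) = (\<Sum>j\<in>?Q. - (\<bar>y j\<bar> *\<^sub>R t j))" by (intro sum.cong) auto
  also have "\<dots> = - (\<Sum>j\<in>?Q. \<bar>y j\<bar> *\<^sub>R t j)" by (rule sum_negf)
  finally show ?thesis by simp
qed

lemma CAUCHYMEM:
  fixes T :: "(nat \<Rightarrow> real) \<Rightarrow> 'e::banach"
  assumes h: "\<And>\<eta>. \<eta> > 0 \<Longrightarrow> \<exists>K. \<forall>F. finite F \<longrightarrow> F \<subseteq> {K..} \<longrightarrow> norm (\<Sum>j\<in>F. \<bar>y j\<bar> *\<^sub>R T (unitvec j)) \<le> \<eta>"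
  shows "y \<in> l1m T"
proof (rule MEM)
  fix A
  have "Cauchy (PSL T y A)"
  proof (rule CauchyI)
    fix e :: real assume e: "e > 0"
    obtain K where K: "\<forall>F. finite F \<longrightarrow> F \<subseteq> {K..} \<longrightarrow> norm (\<Sum>j\<in>F. \<bar>y j\<bar> *\<^sub>R T (unitvec j)) \<le> e/3"
      using h[of "e/3"] e by auto
    have diff: "norm (PSL T y A m - PSL T y A n) \<le> 2 * (e/3)" if "n \<le> m" "K \<le> n" for m n
    proof -
      let ?P = "{j\<in>{n..<m}. j\<in>A \<and> 0 \<le> y j}" and ?Q = "{j\<in>{n..<m}. j\<in>A \<and> y j < 0}"
      have "PSL T y A m - PSL T y A n = (\<Sum>j\<in>{n..<m}. (indicator A j * y j) *\<^sub>R T (unitvec j))"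
        unfolding PSL_def by (rule sum_lessThan_diff[OF that(1)])
      also have "\<dots> = (\<Sum>j\<in>?P. \<bar>y j\<bar> *\<^sub>R T (unitvec j)) - (\<Sum>j\<in>?Q. \<bar>y j\<bar> *\<^sub>R T (unitvec j))"
        by (rule split_sum) simp
      finally have eq: "PSL T y A m - PSL T y A n = (\<Sum>j\<in>?P. \<bar>y j\<bar> *\<^sub>R T (unitvec j)) - (\<Sum>j\<in>?Q. \<bar>y j\<bar> *\<^sub>R T (unitvec j))" .
      have sP: "?P \<subseteq> {K..}" and sQ: "?Q \<subseteq> {K..}" using that by auto
      have fP: "finite ?P" and fQ: "finite ?Q" by auto
      have "norm (\<Sum>j\<in>?P. \<bar>y j\<bar> *\<^sub>R T (unitvec j)) \<le> e/3" using K sP fP by blast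
      moreover have "norm (\<Sum>j\<in>?Q. \<bar>y j\<bar> *\<^sub>R T (unitvec j)) \<le> e/3" using K sQ fQ by blast
      ultimately show ?thesis unfolding eq by (smt (verit) norm_triangle_ineq4)
    qed
    have "norm (PSL T y A m - PSL T y A n) < e" if "m \<ge> K" "n \<ge> K" for m n
    proof (cases "n \<le> m")
      case True then show ?thesis using diff[of n m] that e by simp
    next
      case False then show ?thesis using diff[of m n] that e by (simp add: norm_minus_commute)
    qed
    then show "\<exists>M. \<forall>m\<ge>M. \<forall>n\<ge>M. norm (PSL T y A m - PSL T y A n) < e" by blast
  qed
  then show "\<exists>v. PSL T y A \<longlonglongrightarrow> v" by (simp add: Cauchy_convergent_iff convergent_def)
qed

lemma SPLITBOUND:
  fixes T :: "(nat \<Rightarrow> real) \<Rightarrow> 'e::banach"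
  assumes y: "y \<in> l1m T" and M: "\<And>F. finite F \<Longrightarrow> norm (\<Sum>j\<in>F. \<bar>y j\<bar> *\<^sub>R T (unitvec j)) \<le> M"
  shows "norm (vec_int T A y) \<le> 2 * M"
proof -
  have lim: "(\<lambda>K. norm (PSL T y A K)) \<longlonglongrightarrow> norm (vec_int T A y)"
    using tendsto_norm[OF l1m_ps[OF y]] .
  have "norm (PSL T y A K) \<le> 2 * M" for K
  proof -
    let ?P = "{j\<in>{..<K}. j\<in>A \<and> 0 \<le> y j}" and ?Q = "{j\<in>{..<K}. j\<in>A \<and> y j < 0}"
    have eq: "PSL T y A K = (\<Sum>j\<in>?P. \<bar>y j\<bar> *\<^sub>R T (unitvec j)) - (\<Sum>j\<in>?Q. \<bar>y j\<bar> *\<^sub>R T (unitvec j))"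
      unfolding PSL_def by (rule split_sum) simp
    have "norm (\<Sum>j\<in>?P. \<bar>y j\<bar> *\<^sub>R T (unitvec j)) \<le> M" by (rule M) simp
    moreover have "norm (\<Sum>j\<in>?Q. \<bar>y j\<bar> *\<^sub>R T (unitvec j)) \<le> M" by (rule M) simp
    ultimately show ?thesis unfolding eq by (smt (verit) norm_triangle_ineq4)
  qed
  then show ?thesis using Lim_bounded[OF lim, of 0] by blast
qed

lemma DOM:
  fixes T :: "(nat \<Rightarrow> real) \<Rightarrow> 'e::banach"
  assumes Cd: "Cd > 0" and r: "r > 0"
    and PD: "\<forall>F x. finite F \<longrightarrow> (\<forall>j\<in>F. 0 \<le> x j) \<longrightarrow>
       norm (\<Sum>j\<in>F. (x j powr r) *\<^sub>R T (unitvec j)) powr (1/r)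
         \<le> Cd * Sup {norm (\<Sum>j\<in>N. x j *\<^sub>R T (unitvec j)) | N. N \<subseteq> F}"
    and u: "u \<in> l1m T" "\<And>j. 0 \<le> u j" and y: "\<And>j. \<bar>y j\<bar> = u j powr r"
  shows "y \<in> l1m T" "norm (vec_int T A y) \<le> 2 * (Cd * norm_l1m T u) powr r"
proof -
  have D1: "norm (\<Sum>j\<in>F. \<bar>y j\<bar> *\<^sub>R T (unitvec j)) \<le> (Cd * B) powr r"
    if F: "finite F" and B: "\<And>N. N \<subseteq> F \<Longrightarrow> norm (\<Sum>j\<in>N. u j *\<^sub>R T (unitvec j)) \<le> B" for F B
  proof -
    let ?X = "{norm (\<Sum>j\<in>N. u j *\<^sub>R T (unitvec j)) | N. N \<subseteq> F}"
    have "Sup ?X \<le> B" by (rule cSup_least) (use B in auto)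
    moreover have "norm (\<Sum>j\<in>F. (u j powr r) *\<^sub>R T (unitvec j)) powr (1/r) \<le> Cd * Sup ?X"
      using PD F u(2) by blast
    ultimately have le: "norm (\<Sum>j\<in>F. (u j powr r) *\<^sub>R T (unitvec j)) powr (1/r) \<le> Cd * B"
      using Cd by (smt (verit) mult_left_mono)
    let ?a = "norm (\<Sum>j\<in>F. (u j powr r) *\<^sub>R T (unitvec j))"
    have "?a = (?a powr (1/r)) powr r" using r by (simp add: powr_powr)
    also have "\<dots> \<le> (Cd * B) powr r" using le r by (intro powr_mono2) auto
    finally show ?thesis using y by simp
  qed
  show mem: "y \<in> l1m T"
  proof (rule CAUCHYMEM)
    fix \<eta> :: real assume eta: "\<eta> > 0"
    define \<eta>' where "\<eta>' = (\<eta> powr (1/r)) / Cd"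
    have eta': "\<eta>' > 0" using eta Cd by (simp add: \<eta>'_def)
    obtain K where K: "\<forall>F. finite F \<longrightarrow> F \<subseteq> {K..} \<longrightarrow> norm (\<Sum>j\<in>F. u j *\<^sub>R T (unitvec j)) \<le> \<eta>'"
      using norm_finite_tail[OF u(1) eta'] by blast
    have "norm (\<Sum>j\<in>F. \<bar>y j\<bar> *\<^sub>R T (unitvec j)) \<le> \<eta>" if F: "finite F" "F \<subseteq> {K..}" for F
    proof -
      have "norm (\<Sum>j\<in>F. \<bar>y j\<bar> *\<^sub>R T (unitvec j)) \<le> (Cd * \<eta>') powr r"
      proof (rule D1[OF F(1)])
        fix N assume "N \<subseteq> F"
        then have "finite N" "N \<subseteq> {K..}" using F finite_subset by auto
        then show "norm (\<Sum>j\<in>N. u j *\<^sub>R T (unitvec j)) \<le> \<eta>'" using K by blast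
      qed
      also have "(Cd * \<eta>') powr r = \<eta>" using Cd eta r by (simp add: \<eta>'_def powr_powr)
      finally show ?thesis .
    qed
    then show "\<exists>K. \<forall>F. finite F \<longrightarrow> F \<subseteq> {K..} \<longrightarrow> norm (\<Sum>j\<in>F. \<bar>y j\<bar> *\<^sub>R T (unitvec j)) \<le> \<eta>" by blast
  qed
  show "norm (vec_int T A y) \<le> 2 * (Cd * norm_l1m T u) powr r"
  proof (rule SPLITBOUND[OF mem])
    fix F :: "nat set" assume F: "finite F"
    show "norm (\<Sum>j\<in>F. \<bar>y j\<bar> *\<^sub>R T (unitvec j)) \<le> (Cd * norm_l1m T u) powr r"
    proof (rule D1[OF F])
      fix N assume "N \<subseteq> F" then have "finite N" using F finite_subset by auto
      then show "norm (\<Sum>j\<in>N. u j *\<^sub>R T (unitvec j)) \<le> norm_l1m T u" by (rule norm_finite_le[OF u(1)])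
    qed
  qed
qed

lemma finsupp_ell1: assumes h: "\<And>n. n \<ge> K \<Longrightarrow> z n = 0" shows "z \<in> ell1"
  unfolding ell1_def mem_Collect_eq by (rule summable_finite[of "{..<K}"]) (use h in \<open>auto simp: not_less\<close>)

lemma finsupp_ellp: assumes h: "\<And>n. n \<ge> K \<Longrightarrow> z n = 0" shows "z \<in> ellp p"
  unfolding ellp_def mem_Collect_eq by (rule summable_finite[of "{..<K}"]) (use h in \<open>auto simp: not_less\<close>)

lemma unitvec_ell1: "unitvec n \<in> ell1"
  by (rule finsupp_ell1[of "Suc n"]) (simp add: unitvec_def)

lemma zero_ell1: "(\<lambda>n. 0) \<in> ell1"
  by (rule finsupp_ell1[of 0]) simp

lemma lin_on_add: "lin_on A R \<Longrightarrow> x \<in> A \<Longrightarrow> y \<in> A \<Longrightarrow> R (\<lambda>n. x n + y n) = R x + R y"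
  by (simp add: lin_on_def)

lemma lin_on_scale: "lin_on A R \<Longrightarrow> x \<in> A \<Longrightarrow> R (\<lambda>n. c * x n) = c *\<^sub>R R x"
  by (simp add: lin_on_def)

lemma lin_T_zero:
  assumes "lin_on ell1 T" shows "T (\<lambda>n. 0) = 0"
proof -
  have "T (\<lambda>n. 0 * 0) = 0 *\<^sub>R T (\<lambda>n. 0)" using lin_on_scale[OF assms zero_ell1, of 0] by simp
  then show ?thesis by simp
qed

lemma T_fin:
  assumes lin: "lin_on ell1 T"
  shows "T (\<lambda>n. if n < K then z n else 0) = (\<Sum>n<K. z n *\<^sub>R T (unitvec n))"
proof (induct K)
  case 0 then show ?case using lin_T_zero[OF lin] by simp
next
  case (Suc K)
  have eq: "(\<lambda>n. if n < Suc K then z n else 0) = (\<lambda>n. (if n < K then z n else 0) + z K * unitvec K n)"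
    by (auto simp: fun_eq_iff unitvec_def less_Suc_eq)
  have m1: "(\<lambda>n. if n < K then z n else 0) \<in> ell1" by (rule finsupp_ell1[of K]) simp
  have m2: "(\<lambda>n. z K * unitvec K n) \<in> ell1" by (rule finsupp_ell1[of "Suc K"]) (simp add: unitvec_def)
  have "T (\<lambda>n. if n < Suc K then z n else 0) = T (\<lambda>n. if n < K then z n else 0) + T (\<lambda>n. z K * unitvec K n)"
    unfolding eq by (rule lin_on_add[OF lin m1 m2])
  also have "T (\<lambda>n. z K * unitvec K n) = z K *\<^sub>R T (unitvec K)"
    by (rule lin_on_scale[OF lin unitvec_ell1])
  finally show ?case using Suc by simp
qed

lemma TAILSUM:
  fixes f :: "nat \<Rightarrow> real"
  assumes "summable f"
  shows "(\<lambda>K. \<Sum>n. (if n < K then 0 else f n)) \<longlonglongrightarrow> 0"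
proof -
  have eq: "(\<Sum>n. (if n < K then 0 else f n)) = suminf f - (\<Sum>n<K. f n)" for K
  proof -
    have s2: "summable (\<lambda>n. if n < K then f n else 0)" by (rule summable_finite[of "{..<K}"]) auto
    have "(\<lambda>n. if n < K then 0 else f n) = (\<lambda>n. f n - (if n < K then f n else 0))" by auto
    then have "(\<Sum>n. (if n < K then 0 else f n)) = suminf f - (\<Sum>n. if n < K then f n else 0)"
      using suminf_diff[OF assms s2] by simp
    also have "(\<Sum>n. if n < K then f n else 0) = (\<Sum>n<K. f n)"
      by (subst suminf_finite[of "{..<K}"]) auto
    finally show ?thesis .
  qed
  have "(\<lambda>K. suminf f - (\<Sum>n<K. f n)) \<longlonglongrightarrow> suminf f - suminf f"
    by (intro tendsto_diff tendsto_const summable_LIMSEQ[OF assms])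
  then show ?thesis unfolding eq by simp
qed

lemma T_PS:
  fixes T :: "(nat \<Rightarrow> real) \<Rightarrow> 'e::real_normed_vector"
  assumes T: "cont_lin_ell1 T" and z: "z \<in> ell1"
  shows "(\<lambda>K. \<Sum>n<K. z n *\<^sub>R T (unitvec n)) \<longlonglongrightarrow> T z"
proof -
  have lin: "lin_on ell1 T" using T by (simp add: cont_lin_ell1_def)
  obtain C where C: "\<forall>x\<in>ell1. norm (T x) \<le> C * (\<Sum>n. \<bar>x n\<bar>)" using T by (auto simp: cont_lin_ell1_def)
  have zs: "summable (\<lambda>n. \<bar>z n\<bar>)" using z by (simp add: ell1_def)
  define tl where "tl K = (\<lambda>n. if n < K then 0 else z n)" for K
  have tl_ell1: "tl K \<in> ell1" for K
    unfolding ell1_def tl_def mem_Collect_eq by (rule summable_comparison_test'[OF zs, of 0]) auto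
  have tr_ell1: "(\<lambda>n. if n < K then z n else 0) \<in> ell1" for K by (rule finsupp_ell1[of K]) simp
  have dec: "T z = (\<Sum>n<K. z n *\<^sub>R T (unitvec n)) + T (tl K)" for K
  proof -
    have "z = (\<lambda>n. (if n < K then z n else 0) + tl K n)" by (auto simp: fun_eq_iff tl_def)
    then have "T z = T (\<lambda>n. (if n < K then z n else 0) + tl K n)" by simp
    also have "\<dots> = T (\<lambda>n. if n < K then z n else 0) + T (tl K)"
      by (rule lin_on_add[OF lin tr_ell1 tl_ell1])
    finally show ?thesis using T_fin[OF lin] by simp
  qed
  have tsum: "(\<lambda>K. \<Sum>n. \<bar>tl K n\<bar>) \<longlonglongrightarrow> 0"
  proof -
    have "(\<lambda>K. \<Sum>n. (if n < K then 0 else \<bar>z n\<bar>)) \<longlonglongrightarrow> 0" by (rule TAILSUM[OF zs])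
    moreover have "(\<lambda>n. \<bar>tl K n\<bar>) = (\<lambda>n. if n < K then 0 else \<bar>z n\<bar>)" for K by (auto simp: tl_def)
    ultimately show ?thesis by simp
  qed
  have "(\<lambda>K. (\<Sum>n<K. z n *\<^sub>R T (unitvec n)) - T z) \<longlonglongrightarrow> 0"
  proof (rule Lim_null_comparison)
    show "\<forall>\<^sub>F K in sequentially. norm ((\<Sum>n<K. z n *\<^sub>R T (unitvec n)) - T z) \<le> C * (\<Sum>n. \<bar>tl K n\<bar>)"
    proof (rule always_eventually, rule allI)
      fix K
      have "norm ((\<Sum>n<K. z n *\<^sub>R T (unitvec n)) - T z) = norm (T (tl K))"
        using dec[of K] by (simp add: norm_minus_commute)
      also have "\<dots> \<le> C * (\<Sum>n. \<bar>tl K n\<bar>)" using C tl_ell1 by blast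
      finally show "norm ((\<Sum>n<K. z n *\<^sub>R T (unitvec n)) - T z) \<le> C * (\<Sum>n. \<bar>tl K n\<bar>)" .
    qed
    show "(\<lambda>K. C * (\<Sum>n. \<bar>tl K n\<bar>)) \<longlonglongrightarrow> 0" using tendsto_mult_right_zero[OF tsum] .
  qed
  then show ?thesis by (rule LIM_zero_cancel)
qed

lemma ell1_l1m:
  fixes T :: "(nat \<Rightarrow> real) \<Rightarrow> 'e::real_normed_vector"
  assumes T: "cont_lin_ell1 T" and x: "x \<in> ell1"
  shows "x \<in> l1m T" "I_m T x = T x"
proof -
  have z: "(\<lambda>n. indicator A n * x n) \<in> ell1" for A
    using x unfolding ell1_def mem_Collect_eq
    by (rule summable_comparison_test'[of "\<lambda>n. \<bar>x n\<bar>" 0]) (auto simp: indicator_def)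
  have lim: "PSL T x A \<longlonglongrightarrow> T (\<lambda>n. indicator A n * x n)" for A
    unfolding PSL_def using T_PS[OF T z[of A]] .
  show mem: "x \<in> l1m T" using lim by (intro MEM) blast
  have "vec_int T UNIV x = T (\<lambda>n. indicator UNIV n * x n)" by (rule vec_int_ps[OF lim mem])
  then show "I_m T x = T x" by (simp add: I_m_def)
qed

lemma powr_inv_p:
  fixes a p :: real assumes "p > 0"
  shows "(\<bar>a\<bar> powr (1/p)) powr p = \<bar>a\<bar>"
  using assms by (simp add: powr_powr)

lemma ind_powr:
  fixes a p :: real assumes "p > 0"
  shows "\<bar>indicator A n * (\<bar>a\<bar> powr (1/p))\<bar> powr p = indicator A n * \<bar>a\<bar>"
  using assms by (cases "n \<in> A") (auto simp: powr_powr)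

lemma ellp_ext:
  fixes T :: "(nat \<Rightarrow> real) \<Rightarrow> 'e::banach"
  assumes T: "cont_lin_ell1 T" and ext: "has_ext_ellp T p" and p: "p > 1" and x: "x \<in> ell1"
  shows "(\<lambda>n. \<bar>x n\<bar> powr (1/p)) \<in> l1m T"
proof -
  obtain T' C' where T'1: "\<forall>x\<in>ell1. T' x = T x" and T'2: "lin_on (ellp p) T'"
    and T'3: "\<forall>x\<in>ellp p. norm (T' x) \<le> C' * (\<Sum>n. \<bar>x n\<bar> powr p) powr (1/p)"
    using ext by (auto simp: has_ext_ellp_def)
  have lin: "lin_on ell1 T" using T by (simp add: cont_lin_ell1_def)
  have xs: "summable (\<lambda>n. \<bar>x n\<bar>)" using x by (simp add: ell1_def)
  have p0: "p > 0" using p by simp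
  show ?thesis
  proof (rule MEM)
    fix A
    define w where "w n = indicator A n * (\<bar>x n\<bar> powr (1/p))" for n
    have wp: "\<bar>w n\<bar> powr p = indicator A n * \<bar>x n\<bar>" for n unfolding w_def by (rule ind_powr[OF p0])
    have wps: "summable (\<lambda>n. \<bar>w n\<bar> powr p)"
      unfolding wp by (rule summable_comparison_test'[OF xs, of 0]) (auto simp: indicator_def)
    define tl where "tl K = (\<lambda>n. if n < K then 0 else w n)" for K
    define tr where "tr K = (\<lambda>n. if n < K then w n else 0)" for K
    have tlp: "(\<lambda>n. \<bar>tl K n\<bar> powr p) = (\<lambda>n. if n < K then 0 else \<bar>w n\<bar> powr p)" for K
      by (auto simp: tl_def fun_eq_iff)
    have tl_ellp: "tl K \<in> ellp p" for K
      unfolding ellp_def mem_Collect_eq tlp by (rule summable_comparison_test'[OF wps, of 0]) auto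
    have tr_ell1: "tr K \<in> ell1" for K unfolding tr_def by (rule finsupp_ell1[of K]) simp
    have tr_ellp: "tr K \<in> ellp p" for K unfolding tr_def by (rule finsupp_ellp[of K]) simp
    have dec: "T' w = PSL T (\<lambda>n. \<bar>x n\<bar> powr (1/p)) A K + T' (tl K)" for K
    proof -
      have "w = (\<lambda>n. tr K n + tl K n)" by (auto simp: fun_eq_iff tr_def tl_def)
      then have "T' w = T' (\<lambda>n. tr K n + tl K n)" by simp
      also have "\<dots> = T' (tr K) + T' (tl K)" by (rule lin_on_add[OF T'2 tr_ellp tl_ellp])
      also have "T' (tr K) = T (tr K)" using T'1 tr_ell1 by blast
      also have "T (tr K) = PSL T (\<lambda>n. \<bar>x n\<bar> powr (1/p)) A K"
        unfolding tr_def PSL_def T_fin[OF lin] w_def by simp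
      finally show ?thesis .
    qed
    have ts: "(\<lambda>K. \<Sum>n. \<bar>tl K n\<bar> powr p) \<longlonglongrightarrow> 0"
      unfolding tlp by (rule TAILSUM[OF wps])
    have ts2: "(\<lambda>K. (\<Sum>n. \<bar>tl K n\<bar> powr p) powr (1/p)) \<longlonglongrightarrow> 0"
    proof (rule tendsto_zero_powrI[OF ts tendsto_const])
      show "\<forall>\<^sub>F K in sequentially. 0 \<le> (\<Sum>n. \<bar>tl K n\<bar> powr p)"
        using tl_ellp by (intro always_eventually allI suminf_nonneg) (auto simp: ellp_def)
      show "0 < 1/p" using p by simp
    qed
    have "(\<lambda>K. PSL T (\<lambda>n. \<bar>x n\<bar> powr (1/p)) A K - T' w) \<longlonglongrightarrow> 0"
    proof (rule Lim_null_comparison)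
      show "\<forall>\<^sub>F K in sequentially. norm (PSL T (\<lambda>n. \<bar>x n\<bar> powr (1/p)) A K - T' w) \<le> C' * (\<Sum>n. \<bar>tl K n\<bar> powr p) powr (1/p)"
      proof (rule always_eventually, rule allI)
        fix K
        have "norm (PSL T (\<lambda>n. \<bar>x n\<bar> powr (1/p)) A K - T' w) = norm (T' (tl K))"
          using dec[of K] by (simp add: norm_minus_commute)
        also have "\<dots> \<le> C' * (\<Sum>n. \<bar>tl K n\<bar> powr p) powr (1/p)" using T'3 tl_ellp by blast
        finally show "norm (PSL T (\<lambda>n. \<bar>x n\<bar> powr (1/p)) A K - T' w) \<le> C' * (\<Sum>n. \<bar>tl K n\<bar> powr p) powr (1/p)" .
      qed
      show "(\<lambda>K. C' * (\<Sum>n. \<bar>tl K n\<bar> powr p) powr (1/p)) \<longlonglongrightarrow> 0" using tendsto_mult_right_zero[OF ts2] .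
    qed
    then have "PSL T (\<lambda>n. \<bar>x n\<bar> powr (1/p)) A \<longlonglongrightarrow> T' w" by (rule LIM_zero_cancel)
    then show "\<exists>v. PSL T (\<lambda>n. \<bar>x n\<bar> powr (1/p)) A \<longlonglongrightarrow> v" by blast
  qed
qed

lemma OPT:
  fixes T :: "(nat \<Rightarrow> real) \<Rightarrow> 'e::banach" and \<xi> :: "nat measure" and S :: "(nat \<Rightarrow> real) \<Rightarrow> 'e"
  assumes T: "cont_lin_ell1 T" and tn: "\<forall>n. T (unitvec n) \<noteq> 0" and p: "p > 1"
    and sx: "sets \<xi> = UNIV" and Q: "qbfs \<xi> Z N" and soc: "sigma_oc \<xi> Z N" and ell1Z: "ell1 \<subseteq> Z"
    and Sae: "\<forall>f\<in>Z. \<forall>g\<in>Z. (AE n in \<xi>. f n = g n) \<longrightarrow> S f = S g"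
    and Slin: "lin_on Z S" and ST: "\<forall>x\<in>ell1. S x = T x" and pf: "pfact Z N p S"
  shows "\<forall>n. emeasure \<xi> {n} > 0" "\<forall>f\<in>Z. f \<in> l1m T \<and> S f = I_m T f"
    "\<forall>f\<in>Z. (\<lambda>n. \<bar>f n\<bar> powr (1/p)) \<in> l1m T"
proof -
  have lin: "lin_on ell1 T" using T by (simp add: cont_lin_ell1_def)
  have p0: "p > 0" using p by simp
  have Z0: "(\<lambda>n. 0) \<in> Z"
    and Zsol: "\<And>f g. f \<in> Z \<Longrightarrow> (AE n in \<xi>. \<bar>g n\<bar> \<le> \<bar>f n\<bar>) \<Longrightarrow> g \<in> Z \<and> N g \<le> N f"
    and Npos: "\<And>f. f \<in> Z \<Longrightarrow> 0 \<le> N f \<and> (N f = 0 \<longleftrightarrow> (AE n in \<xi>. f n = 0))"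
    using Q unfolding qbfs_def by blast+
  have sol: "g \<in> Z" "N g \<le> N f" if "f \<in> Z" "\<And>n. \<bar>g n\<bar> \<le> \<bar>f n\<bar>" for f g
    using Zsol[OF that(1)] that(2) by (auto intro: AE_I2)
  have N0: "N (\<lambda>n. 0) = 0" using Npos[OF Z0] by simp
  show pos: "\<forall>n. emeasure \<xi> {n} > 0"
  proof
    fix n show "emeasure \<xi> {n} > 0"
    proof (rule ccontr)
      assume "\<not> emeasure \<xi> {n} > 0"
      then have e0: "emeasure \<xi> {n} = 0" by (simp add: not_gr_zero)
      have "{n} \<in> null_sets \<xi>" using e0 sx by (auto intro: null_setsI)
      moreover have "{m \<in> space \<xi>. \<not> unitvec n m = 0} \<subseteq> {n}" by (auto simp: unitvec_def)
      ultimately have ae: "AE m in \<xi>. unitvec n m = 0" by (rule AE_I')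
      have u1: "unitvec n \<in> Z" using ell1Z unitvec_ell1 by blast
      have u2: "(\<lambda>m. 0) \<in> Z" using ell1Z zero_ell1 by blast
      have "S (unitvec n) = S (\<lambda>m. 0)" using Sae[rule_format, OF u1 u2] ae by simp
      then have "T (unitvec n) = T (\<lambda>m. 0)" using ST unitvec_ell1 zero_ell1 by simp
      then show False using tn lin_T_zero[OF lin] by simp
    qed
  qed
  obtain R' C where R'1: "\<forall>f\<in>Z. R' f = S f" and R'2: "lin_on (powsum Z p) R'"
    and R'3: "\<forall>f\<in>powsum Z p. norm (R' f) \<le> C * powsum_norm Z N p f"
    using pf unfolding pfact_def by blast
  define C0 where "C0 = max C 0"
  have C0: "C0 \<ge> 0" unfolding C0_def by simp
  have psn_nonneg: "0 \<le> powsum_norm Z N p f" if fP: "f \<in> powsum Z p" for f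
  proof -
    obtain f1 f2 where d: "decomp Z p f f1 f2" using fP unfolding powsum_def by blast
    show ?thesis unfolding powsum_norm_def
    proof (rule cInf_greatest)
      show "{N (\<lambda>n. \<bar>f1 n\<bar> powr p) powr (1/p) + N f2 | f1 f2. decomp Z p f f1 f2} \<noteq> {}" using d by blast
    next
      fix a assume "a \<in> {N (\<lambda>n. \<bar>f1 n\<bar> powr p) powr (1/p) + N f2 | f1 f2. decomp Z p f f1 f2}"
      then obtain g1 g2 where "a = N (\<lambda>n. \<bar>g1 n\<bar> powr p) powr (1/p) + N g2" "decomp Z p f g1 g2" by blast
      then show "0 \<le> a" using Npos unfolding decomp_def by auto
    qed
  qed
  have psn_le: "powsum_norm Z N p f \<le> N (\<lambda>n. \<bar>f1 n\<bar> powr p) powr (1/p) + N f2" if d: "decomp Z p f f1 f2" for f f1 f2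
    unfolding powsum_norm_def
  proof (rule cInf_lower)
    show "N (\<lambda>n. \<bar>f1 n\<bar> powr p) powr (1/p) + N f2 \<in> {N (\<lambda>n. \<bar>f1 n\<bar> powr p) powr (1/p) + N f2 | f1 f2. decomp Z p f f1 f2}"
      using d by blast
    show "bdd_below {N (\<lambda>n. \<bar>f1 n\<bar> powr p) powr (1/p) + N f2 | f1 f2. decomp Z p f f1 f2}"
    proof (rule bdd_belowI[of _ 0])
      fix a assume "a \<in> {N (\<lambda>n. \<bar>f1 n\<bar> powr p) powr (1/p) + N f2 | f1 f2. decomp Z p f f1 f2}"
      then obtain g1 g2 where "a = N (\<lambda>n. \<bar>g1 n\<bar> powr p) powr (1/p) + N g2" "decomp Z p f g1 g2" by blast
      then show "0 \<le> a" using Npos unfolding decomp_def by auto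
    qed
  qed
  have dZ: "decomp Z p f (\<lambda>n. 0) f" if "f \<in> Z" for f
    using that Z0 by (simp add: decomp_def)
  have dP: "decomp Z p v v (\<lambda>n. 0)" if "(\<lambda>n. \<bar>v n\<bar> powr p) \<in> Z" for v
    using that Z0 by (simp add: decomp_def)
  have ZP: "f \<in> powsum Z p" if "f \<in> Z" for f using dZ[OF that] unfolding powsum_def by blast
  have PP: "v \<in> powsum Z p" if "(\<lambda>n. \<bar>v n\<bar> powr p) \<in> Z" for v using dP[OF that] unfolding powsum_def by blast
  have Sb: "norm (S h) \<le> C0 * N h" if h: "h \<in> Z" for h
  proof -
    have "norm (S h) = norm (R' h)" using R'1 h by simp
    also have "\<dots> \<le> C * powsum_norm Z N p h" using R'3 ZP[OF h] by blast
    also have "\<dots> \<le> C0 * powsum_norm Z N p h"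
      using psn_nonneg[OF ZP[OF h]] by (intro mult_right_mono) (auto simp: C0_def)
    also have "\<dots> \<le> C0 * (N (\<lambda>n. \<bar>0::real\<bar> powr p) powr (1/p) + N h)"
      using psn_le[OF dZ[OF h]] C0 by (intro mult_left_mono) auto
    also have "\<dots> = C0 * N h" using N0 by simp
    finally show ?thesis .
  qed
  have Rb: "norm (R' v) \<le> C0 * N (\<lambda>n. \<bar>v n\<bar> powr p) powr (1/p)" if v: "(\<lambda>n. \<bar>v n\<bar> powr p) \<in> Z" for v
  proof -
    have "norm (R' v) \<le> C * powsum_norm Z N p v" using R'3 PP[OF v] by blast
    also have "\<dots> \<le> C0 * powsum_norm Z N p v"
      using psn_nonneg[OF PP[OF v]] by (intro mult_right_mono) (auto simp: C0_def)
    also have "\<dots> \<le> C0 * (N (\<lambda>n. \<bar>v n\<bar> powr p) powr (1/p) + N (\<lambda>n. 0))"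
      using psn_le[OF dP[OF v]] C0 by (intro mult_left_mono) auto
    also have "\<dots> = C0 * N (\<lambda>n. \<bar>v n\<bar> powr p) powr (1/p)" using N0 by simp
    finally show ?thesis .
  qed
  have Ntail: "(\<lambda>K. N (\<lambda>n. if n < K then 0 else \<bar>f n\<bar>)) \<longlonglongrightarrow> 0" if f: "f \<in> Z" for f
  proof -
    let ?F = "\<lambda>K n. if n < K then 0 else \<bar>f n\<bar>"
    have FZ: "\<forall>K. ?F K \<in> Z" using sol(1)[OF f] by auto
    have "AE n in \<xi>. (\<forall>k. ?F (Suc k) n \<le> ?F k n) \<and> (\<lambda>k. ?F k n) \<longlonglongrightarrow> 0"
    proof (rule AE_I2, intro conjI allI)
      fix n k show "?F (Suc k) n \<le> ?F k n" by auto
    next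
      fix n
      have "eventually (\<lambda>k. ?F k n = 0) sequentially"
        unfolding eventually_sequentially by (intro exI[of _ "Suc n"]) auto
      then show "(\<lambda>k. ?F k n) \<longlonglongrightarrow> 0" by (rule tendsto_eventually)
    qed
    note ae = this
    have "\<forall>F. (\<forall>k. F k \<in> Z) \<longrightarrow> (AE n in \<xi>. (\<forall>k. F (Suc k) n \<le> F k n) \<and> (\<lambda>k. F k n) \<longlonglongrightarrow> 0) \<longrightarrow>
      (\<lambda>k. N (F k)) \<longlonglongrightarrow> 0" using soc unfolding sigma_oc_def .
    then have "(\<forall>k. ?F k \<in> Z) \<longrightarrow> (AE n in \<xi>. (\<forall>k. ?F (Suc k) n \<le> ?F k n) \<and> (\<lambda>k. ?F k n) \<longlonglongrightarrow> 0) \<longrightarrow>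
      (\<lambda>k. N (?F k)) \<longlonglongrightarrow> 0" by (rule spec)
    then show ?thesis using FZ ae by blast
  qed
  have part1: "PSL T f A \<longlonglongrightarrow> S (\<lambda>n. indicator A n * f n)" if f: "f \<in> Z" for f A
  proof -
    define fA where "fA n = indicator A n * f n" for n
    have fAZ: "fA \<in> Z" using sol(1)[OF f] by (auto simp: fA_def indicator_def)
    define h where "h K = (\<lambda>n. if n < K then fA n else 0)" for K
    define tl where "tl K = (\<lambda>n. if n < K then 0 else fA n)" for K
    have hZ: "h K \<in> ell1" for K unfolding h_def by (rule finsupp_ell1[of K]) simp
    have tlZ: "tl K \<in> Z" for K using sol(1)[OF f] by (auto simp: tl_def fA_def indicator_def)
    have hS: "S (h K) = PSL T f A K" for K
      using ST hZ unfolding h_def PSL_def fA_def by (simp add: T_fin[OF lin])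
    have dec: "S fA = PSL T f A K + S (tl K)" for K
    proof -
      have "fA = (\<lambda>n. h K n + tl K n)" by (auto simp: fun_eq_iff h_def tl_def)
      then have "S fA = S (\<lambda>n. h K n + tl K n)" by simp
      also have "\<dots> = S (h K) + S (tl K)" using lin_on_add[OF Slin] hZ ell1Z tlZ by blast
      finally show ?thesis using hS by simp
    qed
    have "(\<lambda>K. PSL T f A K - S fA) \<longlonglongrightarrow> 0"
    proof (rule Lim_null_comparison)
      show "\<forall>\<^sub>F K in sequentially. norm (PSL T f A K - S fA) \<le> C0 * N (\<lambda>n. if n < K then 0 else \<bar>f n\<bar>)"
      proof (rule always_eventually, rule allI)
        fix K
        have "norm (PSL T f A K - S fA) = norm (S (tl K))" using dec[of K] by (simp add: norm_minus_commute)
        also have "\<dots> \<le> C0 * N (tl K)" by (rule Sb[OF tlZ])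
        also have "\<dots> \<le> C0 * N (\<lambda>n. if n < K then 0 else \<bar>f n\<bar>)"
        proof -
          have "(\<lambda>n. if n < K then 0 else \<bar>f n\<bar>) \<in> Z" using sol(1)[OF f] by auto
          then have "N (tl K) \<le> N (\<lambda>n. if n < K then 0 else \<bar>f n\<bar>)"
            by (rule sol(2)) (auto simp: tl_def fA_def indicator_def)
          then show ?thesis using C0 by (rule mult_left_mono)
        qed
        finally show "norm (PSL T f A K - S fA) \<le> C0 * N (\<lambda>n. if n < K then 0 else \<bar>f n\<bar>)" .
      qed
      show "(\<lambda>K. C0 * N (\<lambda>n. if n < K then 0 else \<bar>f n\<bar>)) \<longlonglongrightarrow> 0"
        using tendsto_mult_right_zero[OF Ntail[OF f]] .
    qed
    then show ?thesis unfolding fA_def by (rule LIM_zero_cancel)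
  qed
  show "\<forall>f\<in>Z. f \<in> l1m T \<and> S f = I_m T f"
  proof
    fix f assume f: "f \<in> Z"
    have mem: "f \<in> l1m T" using part1[OF f] by (intro MEM) blast
    have "vec_int T UNIV f = S (\<lambda>n. indicator UNIV n * f n)" by (rule vec_int_ps[OF part1[OF f] mem])
    then show "f \<in> l1m T \<and> S f = I_m T f" using mem by (simp add: I_m_def)
  qed
  show "\<forall>f\<in>Z. (\<lambda>n. \<bar>f n\<bar> powr (1/p)) \<in> l1m T"
  proof
    fix f assume f: "f \<in> Z"
    let ?u = "\<lambda>n. \<bar>f n\<bar> powr (1/p)"
    show "?u \<in> l1m T"
    proof (rule MEM)
      fix A
      define w where "w n = indicator A n * ?u n" for n
      have wp: "\<bar>w n\<bar> powr p = indicator A n * \<bar>f n\<bar>" for n unfolding w_def by (rule ind_powr[OF p0])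
      have wZ: "(\<lambda>n. \<bar>w n\<bar> powr p) \<in> Z" unfolding wp using sol(1)[OF f] by (auto simp: indicator_def)
      define h where "h K = (\<lambda>n. if n < K then w n else 0)" for K
      define tl where "tl K = (\<lambda>n. if n < K then 0 else w n)" for K
      have tlp: "(\<lambda>n. \<bar>tl K n\<bar> powr p) = (\<lambda>n. if n < K then 0 else indicator A n * \<bar>f n\<bar>)" for K
        by (auto simp: tl_def wp fun_eq_iff)
      have tlpn: "\<bar>tl K n\<bar> powr p = (if n < K then 0 else indicator A n * \<bar>f n\<bar>)" for K n
        by (auto simp: tl_def wp)
      have tlZ: "(\<lambda>n. \<bar>tl K n\<bar> powr p) \<in> Z" for K unfolding tlp using sol(1)[OF f] by (auto simp: indicator_def)
      have h1: "h K \<in> ell1" for K unfolding h_def by (rule finsupp_ell1[of K]) simp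
      have hR: "R' (h K) = PSL T ?u A K" for K
      proof -
        have "h K \<in> Z" using h1 ell1Z by blast
        then have "R' (h K) = S (h K)" using R'1 by blast
        also have "\<dots> = T (h K)" using ST h1 by blast
        also have "\<dots> = PSL T ?u A K" unfolding h_def PSL_def w_def by (rule T_fin[OF lin])
        finally show ?thesis .
      qed
      have dec: "R' w = PSL T ?u A K + R' (tl K)" for K
      proof -
        have "w = (\<lambda>n. h K n + tl K n)" by (auto simp: fun_eq_iff h_def tl_def)
        then have "R' w = R' (\<lambda>n. h K n + tl K n)" by simp
        also have "\<dots> = R' (h K) + R' (tl K)" using lin_on_add[OF R'2] ZP h1 ell1Z PP[OF tlZ] by blast
        finally show ?thesis using hR by simp
      qed
      have tsp: "(\<lambda>K. N (\<lambda>n. if n < K then 0 else \<bar>f n\<bar>) powr (1/p)) \<longlonglongrightarrow> 0"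
      proof (rule tendsto_zero_powrI[OF Ntail[OF f] tendsto_const])
        show "\<forall>\<^sub>F K in sequentially. 0 \<le> N (\<lambda>n. if n < K then 0 else \<bar>f n\<bar>)"
          using Npos sol(1)[OF f] by (intro always_eventually allI) auto
        show "0 < 1/p" using p by simp
      qed
      have "(\<lambda>K. PSL T ?u A K - R' w) \<longlonglongrightarrow> 0"
      proof (rule Lim_null_comparison)
        show "\<forall>\<^sub>F K in sequentially. norm (PSL T ?u A K - R' w) \<le> C0 * N (\<lambda>n. if n < K then 0 else \<bar>f n\<bar>) powr (1/p)"
        proof (rule always_eventually, rule allI)
          fix K
          have "norm (PSL T ?u A K - R' w) = norm (R' (tl K))" using dec[of K] by (simp add: norm_minus_commute)
          also have "\<dots> \<le> C0 * N (\<lambda>n. \<bar>tl K n\<bar> powr p) powr (1/p)" by (rule Rb[OF tlZ])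
          also have "\<dots> \<le> C0 * N (\<lambda>n. if n < K then 0 else \<bar>f n\<bar>) powr (1/p)"
          proof -
            have fz: "(\<lambda>n. if n < K then 0 else \<bar>f n\<bar>) \<in> Z" using sol(1)[OF f] by auto
            have "N (\<lambda>n. \<bar>tl K n\<bar> powr p) \<le> N (\<lambda>n. if n < K then 0 else \<bar>f n\<bar>)"
              by (rule sol(2)[OF fz]) (auto simp: tlpn indicator_def)
            then have "N (\<lambda>n. \<bar>tl K n\<bar> powr p) powr (1/p) \<le> N (\<lambda>n. if n < K then 0 else \<bar>f n\<bar>) powr (1/p)"
              using Npos[OF tlZ] p by (intro powr_mono2) auto
            then show ?thesis using C0 by (rule mult_left_mono)
          qed
          finally show "norm (PSL T ?u A K - R' w) \<le> C0 * N (\<lambda>n. if n < K then 0 else \<bar>f n\<bar>) powr (1/p)" .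
        qed
        show "(\<lambda>K. C0 * N (\<lambda>n. if n < K then 0 else \<bar>f n\<bar>) powr (1/p)) \<longlonglongrightarrow> 0"
          using tendsto_mult_right_zero[OF tsp] .
      qed
      then have "PSL T ?u A \<longlonglongrightarrow> R' w" by (rule LIM_zero_cancel)
      then show "\<exists>v. PSL T ?u A \<longlonglongrightarrow> v" by blast
    qed
  qed
qed



lemma pfact_I:
  fixes T :: "(nat \<Rightarrow> real) \<Rightarrow> 'e::banach"
  assumes sub: "powsum Z p \<subseteq> l1m T" and C: "C > 0"
    and bnd: "\<And>f f1 f2. decomp Z p f f1 f2 \<Longrightarrow> norm (I_m T f) \<le> C * (N (\<lambda>n. \<bar>f1 n\<bar> powr p) powr (1/p) + N f2)"
  shows "pfact Z N p (I_m T)"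
  unfolding pfact_def
proof (intro exI[of _ "I_m T"] conjI ballI)
  show "lin_on (powsum Z p) (I_m T)" unfolding lin_on_def I_m_def
    using sub l1m_add(2) l1m_scale(2) by blast
  show "\<exists>C. \<forall>f\<in>powsum Z p. norm (I_m T f) \<le> C * powsum_norm Z N p f"
  proof (intro exI[of _ C] ballI)
    fix f assume f: "f \<in> powsum Z p"
    have "norm (I_m T f) / C \<le> powsum_norm Z N p f"
      unfolding powsum_norm_def
    proof (rule cInf_greatest)
      show "{N (\<lambda>n. \<bar>f1 n\<bar> powr p) powr (1/p) + N f2 | f1 f2. decomp Z p f f1 f2} \<noteq> {}"
        using f unfolding powsum_def by blast
    next
      fix a assume "a \<in> {N (\<lambda>n. \<bar>f1 n\<bar> powr p) powr (1/p) + N f2 | f1 f2. decomp Z p f f1 f2}"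
      then obtain g1 g2 where a: "a = N (\<lambda>n. \<bar>g1 n\<bar> powr p) powr (1/p) + N g2" and d: "decomp Z p f g1 g2" by blast
      have "norm (I_m T f) \<le> C * a" using bnd[OF d] a by simp
      then show "norm (I_m T f) / C \<le> a" using C by (simp add: divide_le_eq mult.commute)
    qed
    then show "norm (I_m T f) \<le> C * powsum_norm Z N p f" using C by (simp add: divide_le_eq mult.commute)
  qed
qed simp


lemma abs_sgn_le1_real: "\<bar>sgn (x::real)\<bar> \<le> 1"
  by (cases "x > 0"; cases "x < 0") auto

lemma optimal_from_OPT:
  fixes T :: "(nat \<Rightarrow> real) \<Rightarrow> 'e::banach"
  assumes T: "cont_lin_ell1 T" and tn: "\<forall>n. T (unitvec n) \<noteq> 0" and p: "p > 1"
    and X: "\<And>f. f \<in> l1m T \<Longrightarrow> (\<lambda>n. \<bar>f n\<bar> powr (1/p)) \<in> l1m T \<Longrightarrow> f \<in> X"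
  shows "optimal T p X"
  unfolding optimal_def
proof (intro allI impI)
  fix \<xi> :: "nat measure" and Z N and S :: "(nat \<Rightarrow> real) \<Rightarrow> 'e"
  assume h: "sets \<xi> = UNIV" "qbfs \<xi> Z N" "sigma_oc \<xi> Z N" "ell1 \<subseteq> Z"
    "\<forall>f\<in>Z. \<forall>g\<in>Z. (AE n in \<xi>. f n = g n) \<longrightarrow> S f = S g" "lin_on Z S" "\<forall>x\<in>ell1. S x = T x" "pfact Z N p S"
  note O = OPT[OF T tn p h]
  have "Z \<subseteq> X" using O(2,3) X by blast
  then show "(\<forall>n. 0 < emeasure \<xi> {n}) \<and> Z \<subseteq> X \<and> (\<forall>f\<in>Z. S f = I_m T f)" using O(1,2) by blast
qed

theorem corollary7p6:
  fixes T :: "(nat \<Rightarrow> real) \<Rightarrow> 'e::banach" and p :: real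
  assumes "cont_lin_ell1 T"
    and "\<forall>n. T (unitvec n) \<noteq> 0"
    and "p > 1"
  shows "(power_dominated T p \<and> has_ext_ellp T p \<longrightarrow>
            ell1 \<subseteq> lrm T (1/p) \<and> lrm T (1/p) \<subseteq> l1m T \<and>
            (\<forall>x\<in>ell1. T x = I_m T x) \<and>
            pfact (lrm T (1/p)) (norm_lrm T (1/p)) p (I_m T) \<and>
            optimal T p (lrm T (1/p)))
       \<and> (power_dominated T (1/p) \<longrightarrow>
            ell1 \<subseteq> l1m T \<and>
            (\<forall>x\<in>ell1. T x = I_m T x) \<and>
            pfact (l1m T) (norm_l1m T) p (I_m T) \<and>
            optimal T p (l1m T))"
proof -
  note T = assms(1) and tn = assms(2) and p = assms(3)
  have p0: "p > 0" using p by simp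
  have TI: "\<forall>x\<in>ell1. T x = I_m T x" using ell1_l1m[OF T] by simp
  have ell1l1: "ell1 \<subseteq> l1m T" using ell1_l1m[OF T] by blast
  have abs_pp: "\<bar>a\<bar> = (\<bar>a\<bar> powr p) powr (1/p)" for a :: real using p0 by (simp add: powr_powr)
  have partA: "ell1 \<subseteq> lrm T (1/p) \<and> lrm T (1/p) \<subseteq> l1m T \<and>
            (\<forall>x\<in>ell1. T x = I_m T x) \<and>
            pfact (lrm T (1/p)) (norm_lrm T (1/p)) p (I_m T) \<and>
            optimal T p (lrm T (1/p))" if PD: "power_dominated T p" and ext: "has_ext_ellp T p"
  proof -
    obtain Cp where Cp: "Cp > 0" and PDC: "\<forall>F x. finite F \<longrightarrow> (\<forall>j\<in>F. 0 \<le> x j) \<longrightarrow>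
       norm (\<Sum>j\<in>F. (x j powr p) *\<^sub>R T (unitvec j)) powr (1/p)
         \<le> Cp * Sup {norm (\<Sum>j\<in>N. x j *\<^sub>R T (unitvec j)) | N. N \<subseteq> F}"
      using PD unfolding power_dominated_def by blast
    have a1: "ell1 \<subseteq> lrm T (1/p)" using ellp_ext[OF T ext p] by (auto simp: lrm_def)
    have a2: "x \<in> l1m T" "norm (I_m T x) \<le> 2 * (Cp * norm_l1m T (\<lambda>n. \<bar>x n\<bar> powr (1/p))) powr p"
      if x: "x \<in> lrm T (1/p)" for x
    proof -
      have u: "(\<lambda>n. \<bar>x n\<bar> powr (1/p)) \<in> l1m T" using x by (simp add: lrm_def)
      have y: "\<bar>x j\<bar> = (\<bar>x j\<bar> powr (1/p)) powr p" for j using p0 by (simp add: powr_powr)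
      note D = DOM[OF Cp p0 PDC u _ y]
      show "x \<in> l1m T" using D(1) by simp
      show "norm (I_m T x) \<le> 2 * (Cp * norm_l1m T (\<lambda>n. \<bar>x n\<bar> powr (1/p))) powr p"
        unfolding I_m_def using D(2) by simp
    qed
    have a3: "pfact (lrm T (1/p)) (norm_lrm T (1/p)) p (I_m T)"
    proof (rule pfact_I)
      show "powsum (lrm T (1/p)) p \<subseteq> l1m T"
      proof
        fix f assume "f \<in> powsum (lrm T (1/p)) p"
        then obtain f1 f2 where d: "decomp (lrm T (1/p)) p f f1 f2" unfolding powsum_def by blast
        have "(\<lambda>n. \<bar>\<bar>f1 n\<bar> powr p\<bar> powr (1/p)) \<in> l1m T" using d by (simp add: decomp_def lrm_def)
        moreover have "(\<lambda>n. \<bar>\<bar>f1 n\<bar> powr p\<bar> powr (1/p)) = (\<lambda>n. \<bar>f1 n\<bar>)" using p0 by (simp add: powr_powr fun_eq_iff)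
        ultimately have "(\<lambda>n. \<bar>f1 n\<bar>) \<in> l1m T" by simp
        from l1m_bmult[OF this, of "\<lambda>n. sgn (f1 n)" 1] have f1: "f1 \<in> l1m T"
          by (simp add: sgn_mult_abs abs_sgn_le1_real)
        have f2: "f2 \<in> l1m T" using d a2(1) by (simp add: decomp_def)
        have "f = (\<lambda>n. f1 n + f2 n)" using d by (simp add: decomp_def fun_eq_iff)
        then show "f \<in> l1m T" using l1m_add(1)[OF f1 f2] by simp
      qed
      show "1 + 2 * Cp powr p > 0" using Cp by (simp add: add_pos_nonneg)
      fix f f1 f2 assume d: "decomp (lrm T (1/p)) p f f1 f2"
      have "(\<lambda>n. \<bar>\<bar>f1 n\<bar> powr p\<bar> powr (1/p)) \<in> l1m T" using d by (simp add: decomp_def lrm_def)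
      moreover have eqf1: "(\<lambda>n. \<bar>\<bar>f1 n\<bar> powr p\<bar> powr (1/p)) = (\<lambda>n. \<bar>f1 n\<bar>)" using p0 by (simp add: powr_powr fun_eq_iff)
      ultimately have af1: "(\<lambda>n. \<bar>f1 n\<bar>) \<in> l1m T" by simp
      from l1m_bmult[OF this, of "\<lambda>n. sgn (f1 n)" 1] have f1: "f1 \<in> l1m T"
        by (simp add: sgn_mult_abs abs_sgn_le1_real)
      have f2l: "f2 \<in> lrm T (1/p)" using d by (simp add: decomp_def)
      have f2: "f2 \<in> l1m T" using a2(1)[OF f2l] .
      have u2: "(\<lambda>n. \<bar>f2 n\<bar> powr (1/p)) \<in> l1m T" using f2l by (simp add: lrm_def)
      have feq: "f = (\<lambda>n. f1 n + f2 n)" using d by (simp add: decomp_def fun_eq_iff)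
      let ?W1 = "norm_l1m T f1" and ?W2 = "norm_l1m T (\<lambda>n. \<bar>f2 n\<bar> powr (1/p))"
      have W1: "?W1 \<ge> 0" using norm_l1m_nonneg[OF f1] .
      have W2: "?W2 \<ge> 0" using norm_l1m_nonneg[OF u2] .
      have N1: "norm_lrm T (1/p) (\<lambda>n. \<bar>f1 n\<bar> powr p) powr (1/p) = ?W1"
      proof -
        have "norm_lrm T (1/p) (\<lambda>n. \<bar>f1 n\<bar> powr p) = norm_l1m T (\<lambda>n. \<bar>f1 n\<bar>) powr p"
          unfolding norm_lrm_def eqf1 by simp
        also have "norm_l1m T (\<lambda>n. \<bar>f1 n\<bar>) = ?W1" by (rule norm_l1m_abs)
        finally show ?thesis using W1 p0 by (simp add: powr_powr)
      qed
      have N2: "norm_lrm T (1/p) f2 = ?W2 powr p" unfolding norm_lrm_def by simp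
      have "I_m T f = I_m T f1 + I_m T f2" unfolding feq I_m_def by (rule l1m_add(2)[OF f1 f2])
      then have "norm (I_m T f) \<le> norm (I_m T f1) + norm (I_m T f2)" by (simp add: norm_triangle_ineq)
      also have "norm (I_m T f1) \<le> ?W1" unfolding I_m_def by (rule norm_vec_int_le[OF f1])
      also have "norm (I_m T f2) \<le> 2 * (Cp * ?W2) powr p" by (rule a2(2)[OF f2l])
      also have "(Cp * ?W2) powr p = Cp powr p * ?W2 powr p" by (rule powr_mult)
      also have "?W1 + 2 * (Cp powr p * ?W2 powr p) \<le> (1 + 2 * Cp powr p) * (?W1 + ?W2 powr p)"
        using W1 by (simp add: algebra_simps add_increasing)
      finally show "norm (I_m T f) \<le> (1 + 2 * Cp powr p) *
          (norm_lrm T (1/p) (\<lambda>n. \<bar>f1 n\<bar> powr p) powr (1/p) + norm_lrm T (1/p) f2)"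
        unfolding N1 N2 by simp
    qed
    have a4: "optimal T p (lrm T (1/p))"
      by (rule optimal_from_OPT[OF T tn p]) (simp add: lrm_def)
    show ?thesis using a1 a2(1) a3 a4 TI by blast
  qed
  have partB: "ell1 \<subseteq> l1m T \<and>
            (\<forall>x\<in>ell1. T x = I_m T x) \<and>
            pfact (l1m T) (norm_l1m T) p (I_m T) \<and>
            optimal T p (l1m T)" if PD: "power_dominated T (1/p)"
  proof -
    obtain Cd where Cd: "Cd > 0" and PDC: "\<forall>F x. finite F \<longrightarrow> (\<forall>j\<in>F. 0 \<le> x j) \<longrightarrow>
       norm (\<Sum>j\<in>F. (x j powr (1/p)) *\<^sub>R T (unitvec j)) powr (1/(1/p))
         \<le> Cd * Sup {norm (\<Sum>j\<in>N. x j *\<^sub>R T (unitvec j)) | N. N \<subseteq> F}"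
      using PD unfolding power_dominated_def by blast
    have r0: "1/p > 0" using p by simp
    have b3: "pfact (l1m T) (norm_l1m T) p (I_m T)"
    proof (rule pfact_I)
      have key: "f1 \<in> l1m T \<and> norm (I_m T f1) \<le> 2 * (Cd * norm_l1m T (\<lambda>n. \<bar>f1 n\<bar> powr p)) powr (1/p)"
        if u: "(\<lambda>n. \<bar>f1 n\<bar> powr p) \<in> l1m T" for f1
      proof -
        have y: "\<bar>f1 j\<bar> = (\<bar>f1 j\<bar> powr p) powr (1/p)" for j using abs_pp .
        note D = DOM[OF Cd r0 PDC u _ y]
        show ?thesis using D unfolding I_m_def by simp
      qed
      show "powsum (l1m T) p \<subseteq> l1m T"
      proof
        fix f assume "f \<in> powsum (l1m T) p"
        then obtain f1 f2 where d: "decomp (l1m T) p f f1 f2" unfolding powsum_def by blast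
        have f1: "f1 \<in> l1m T" using key d by (simp add: decomp_def)
        have f2: "f2 \<in> l1m T" using d by (simp add: decomp_def)
        have "f = (\<lambda>n. f1 n + f2 n)" using d by (simp add: decomp_def fun_eq_iff)
        then show "f \<in> l1m T" using l1m_add(1)[OF f1 f2] by simp
      qed
      show "1 + 2 * Cd powr (1/p) > 0" using Cd by (simp add: add_pos_nonneg)
      fix f f1 f2 assume d: "decomp (l1m T) p f f1 f2"
      have u: "(\<lambda>n. \<bar>f1 n\<bar> powr p) \<in> l1m T" using d by (simp add: decomp_def)
      have f1: "f1 \<in> l1m T" and b1: "norm (I_m T f1) \<le> 2 * (Cd * norm_l1m T (\<lambda>n. \<bar>f1 n\<bar> powr p)) powr (1/p)"
        using key[OF u] by auto
      have f2: "f2 \<in> l1m T" using d by (simp add: decomp_def)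
      have feq: "f = (\<lambda>n. f1 n + f2 n)" using d by (simp add: decomp_def fun_eq_iff)
      let ?W1 = "norm_l1m T (\<lambda>n. \<bar>f1 n\<bar> powr p)" and ?W2 = "norm_l1m T f2"
      have W2: "?W2 \<ge> 0" using norm_l1m_nonneg[OF f2] .
      have "I_m T f = I_m T f1 + I_m T f2" unfolding feq I_m_def by (rule l1m_add(2)[OF f1 f2])
      then have "norm (I_m T f) \<le> norm (I_m T f1) + norm (I_m T f2)" by (simp add: norm_triangle_ineq)
      also have "norm (I_m T f1) \<le> 2 * (Cd * ?W1) powr (1/p)" by (rule b1)
      also have "norm (I_m T f2) \<le> ?W2" unfolding I_m_def by (rule norm_vec_int_le[OF f2])
      also have "(Cd * ?W1) powr (1/p) = Cd powr (1/p) * ?W1 powr (1/p)" by (rule powr_mult)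
      also have "2 * (Cd powr (1/p) * ?W1 powr (1/p)) + ?W2 \<le> (1 + 2 * Cd powr (1/p)) * (?W1 powr (1/p) + ?W2)"
        using W2 by (simp add: algebra_simps add_increasing)
      finally show "norm (I_m T f) \<le> (1 + 2 * Cd powr (1/p)) * (norm_l1m T (\<lambda>n. \<bar>f1 n\<bar> powr p) powr (1/p) + norm_l1m T f2)"
        by simp
    qed
    have b4: "optimal T p (l1m T)" by (rule optimal_from_OPT[OF T tn p])
    show ?thesis using ell1l1 TI b3 b4 by blast
  qed
  show ?thesis using partA partB by blast
qed


end
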